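(* Assume $\mathbb{E}\{h^2(X_{i1},\dots,X_{im})\}<\infty$. Then the variance of $L_{ik}$ is $$\mathbb{V}(L_{ik})=\mathbb{V}(\mathbb{L}_{i1})+(\theta_i-\overline{\theta})^2\,\mathbb{V}(2\widehat{\theta}_i)+(\theta_i-\overline{\theta})\,\Xi^3_i,$$ where $\mathbb{L}_{i1}=\widehat{\theta_i^2}-\theta_i^2-2\theta_i(\widehat{\theta}_i-\theta_i)$.
   Context: Let $m\ge1$ be fixed, $h:E^m\to\mathbb{R}$ a symmetric kernel on a measurable space $(E,\mathcal{E})$. For $i=1,\dots,k$, $\mathbf{X}_i=\{X_{i1},\dots,X_{in_i}\}$ is a random sample of size $n_i\ge2m$ from the distribution of a random element $X_i$ of $E$, the samples independent. Let $\theta_i=\mathbb{E}\{h(X_{i1},\dots,X_{im})\}$, $\overline{\theta}=\frac1k\sum_i\theta_i$. With $n(r)=n(n-1)\cdots(n-r+1)$, $\widehat{\theta}_i=\frac{1}{n_i(m)}\sum h(X_{ij_1},\dots,X_{ij_m})$ over ordered $m$-tuples of pairwise distinct indices in $\{1,\dots,n_i\}$, and $\widehat{\theta_i^2}=\frac{1}{n_i(2m)}\sum h(X_{ij_1},\dots,X_{ij_m})h(X_{ij_{m+1}},\dots,X_{ij_{2m}})$ over ordered $2m$-tuples of pairwise distinct indices. Let $L_{ik}=\widehat{\theta_i^2}-\theta_i^2-2\overline{\theta}(\widehat{\theta}_i-\theta_i)$. For $0\le c\le m$ let $h_{c}(x_1,\dots,x_c)=\mathbb{E}\{h(X_{i1},\dots,X_{im})\mid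 X_{i1}=x_1,\dots,X_{ic}=x_c\}$ (with $h_0=\theta_i$) and $\widetilde{h}_c=h_c-\theta_i$. For $1\le c\le m$, $0\le j\le c$, let $\widetilde{\zeta}^3_{i(c,j)}=\mathrm{Cov}\{\widetilde{h}_c(X_{i1},\dots,X_{ic}),\,\widetilde{h}_j(X_{i1},\dots,X_{ij})\,\widetilde{h}_{c-j}(X_{i(j+1)},\dots,X_{ic})\}$, and $$\Xi^3_i=4\binom{n_i}{2m}^{-1}\binom{2m}{m}^{-1}\sum_{c=1}^m\binom{n_i-m}{2m-c}\binom{m}{c}\sum_{j=1}^c\binom{c}{j}\binom{2m-c}{m-j}\widetilde{\zeta}^3_{i(c,j)},$$ with the convention $\binom{a}{b}=0$ if $b>a$. *)

theory Defs
  imports "HOL-Probability.Probability"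
begin

definition ffall :: "nat \<Rightarrow> nat \<Rightarrow> nat" where
  "ffall n r = (\<Prod>l<r. n - l)"

definition dtuples :: "nat \<Rightarrow> nat \<Rightarrow> nat list set" where
  "dtuples n r = {js. length js = r \<and> distinct js \<and> set js \<subseteq> {..<n}}"

definition cov :: "'a measure \<Rightarrow> ('a \<Rightarrow> real) \<Rightarrow> ('a \<Rightarrow> real) \<Rightarrow> real" where
  "cov M U V = (\<integral>\<omega>. (U \<omega> - (\<integral>x. U x \<partial>M)) * (V \<omega> - (\<integral>x. V x \<partial>M)) \<partial>M)"

definition happ :: "nat \<Rightarrow> ((nat \<Rightarrow> 'e) \<Rightarrow> real) \<Rightarrow> (nat \<Rightarrow> 'e) \<Rightarrow> real" where
  "happ m h x = h (\<lambda>l\<in>{..<m}. x l)"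

definition symmetric_kernel :: "nat \<Rightarrow> 'e measure \<Rightarrow> ((nat \<Rightarrow> 'e) \<Rightarrow> real) \<Rightarrow> bool" where
  "symmetric_kernel m N h \<longleftrightarrow>
     (\<forall>x\<in>space (PiM {..<m} (\<lambda>_. N)). \<forall>\<sigma>. \<sigma> permutes {..<m} \<longrightarrow>
        h (\<lambda>l\<in>{..<m}. x (\<sigma> l)) = h x)"

definition theta_hat :: "nat \<Rightarrow> ((nat \<Rightarrow> 'e) \<Rightarrow> real) \<Rightarrow> nat \<Rightarrow> (nat \<Rightarrow> 'a \<Rightarrow> 'e) \<Rightarrow> 'a \<Rightarrow> real" where
  "theta_hat m h n X \<omega> =
     (\<Sum>js\<in>dtuples n m. happ m h (\<lambda>l. X (js ! l) \<omega>)) / real (ffall n m)"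

definition theta2_hat :: "nat \<Rightarrow> ((nat \<Rightarrow> 'e) \<Rightarrow> real) \<Rightarrow> nat \<Rightarrow> (nat \<Rightarrow> 'a \<Rightarrow> 'e) \<Rightarrow> 'a \<Rightarrow> real" where
  "theta2_hat m h n X \<omega> =
     (\<Sum>js\<in>dtuples n (2*m). happ m h (\<lambda>l. X (js ! l) \<omega>) * happ m h (\<lambda>l. X (js ! (m + l)) \<omega>))
       / real (ffall n (2*m))"

text \<open>h_c(x_0,...,x_{c-1}) = E h(x_0,...,x_{c-1},Y_c,...,Y_{m-1}) with Y_l iid with law D
  (the conditional expectation given the first c observations, for iid observations).\<close>
definition hcond :: "nat \<Rightarrow> 'e measure \<Rightarrow> ((nat \<Rightarrow> 'e) \<Rightarrow> real) \<Rightarrow> nat \<Rightarrow> (nat \<Rightarrow> 'e) \<Rightarrow> real" where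
  "hcond m D h c x = (\<integral>y. happ m h (\<lambda>l. if l < c then x l else y l) \<partial>(PiM {c..<m} (\<lambda>_. D)))"

text \<open>Centred version; for c = 0 it is h_0 - theta = 0 with h_0 = theta.\<close>
definition htil :: "nat \<Rightarrow> 'e measure \<Rightarrow> ((nat \<Rightarrow> 'e) \<Rightarrow> real) \<Rightarrow> real \<Rightarrow> nat \<Rightarrow> (nat \<Rightarrow> 'e) \<Rightarrow> real" where
  "htil m D h \<theta> c x = (if c = 0 then 0 else hcond m D h c x - \<theta>)"

definition zeta3 :: "'a measure \<Rightarrow> nat \<Rightarrow> 'e measure \<Rightarrow> ((nat \<Rightarrow> 'e) \<Rightarrow> real) \<Rightarrow> real
    \<Rightarrow> (nat \<Rightarrow> 'a \<Rightarrow> 'e) \<Rightarrow> nat \<Rightarrow> nat \<Rightarrow> real" where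
  "zeta3 M m D h \<theta> X c j =
     cov M (\<lambda>\<omega>. htil m D h \<theta> c (\<lambda>l. X l \<omega>))
           (\<lambda>\<omega>. htil m D h \<theta> j (\<lambda>l. X l \<omega>) * htil m D h \<theta> (c - j) (\<lambda>l. X (j + l) \<omega>))"

definition Xi3 :: "'a measure \<Rightarrow> nat \<Rightarrow> 'e measure \<Rightarrow> ((nat \<Rightarrow> 'e) \<Rightarrow> real) \<Rightarrow> real
    \<Rightarrow> (nat \<Rightarrow> 'a \<Rightarrow> 'e) \<Rightarrow> nat \<Rightarrow> real" where
  "Xi3 M m D h \<theta> X n =
     4 / (real (n choose (2*m)) * real ((2*m) choose m)) *
     (\<Sum>c=1..m. real ((n - m) choose (2*m - c)) * real (m choose c) *
        (\<Sum>j=1..c. real (c choose j) * real ((2*m - c) choose (m - j)) * zeta3 M m D h \<theta> X c j))"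

end

theory Submission
  imports Defs
begin

lemma ffall_Suc: "ffall k (Suc r) = ffall k r * (k - r)"
  by (simp add: ffall_def)

lemma ffall_prod: "r \<le> k \<Longrightarrow> ffall k r = \<Prod>{k - r + 1..k}"
proof (induction r)
  case 0 then show ?case by (simp add: ffall_def)
next
  case (Suc r)
  have IH: "ffall k r = \<Prod>{k - r + 1..k}" using Suc by simp
  have e: "{k - Suc r + 1..k} = insert (k - r) {k - r + 1..k}"
    using Suc.prems by auto
  have ni: "k - r \<notin> {k - r + 1..k}" by auto
  have "ffall k (Suc r) = ffall k r * (k - r)" by (rule ffall_Suc)
  also have "\<dots> = (k - r) * \<Prod>{k - r + 1..k}" unfolding IH by simp
  also have "\<dots> = \<Prod>(insert (k - r) {k - r + 1..k})" using ni by simp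
  also have "\<dots> = \<Prod>{k - Suc r + 1..k}" unfolding e ..
  finally show ?case .
qed

lemma ffall_add: "ffall n (a + b) = ffall n a * ffall (n - a) b"
  by (induction b) (simp_all add: ffall_def diff_diff_left)

lemma ffall_fact: "r \<le> n \<Longrightarrow> ffall n r * fact (n - r) = (fact n :: nat)"
proof (induction r)
  case 0 then show ?case by (simp add: ffall_def)
next
  case (Suc r)
  have "n - r = Suc (n - Suc r)" using Suc.prems by auto
  then have "fact (n - r) = (n - r) * (fact (n - Suc r) :: nat)" by simp
  then show ?case using Suc by (simp add: ffall_Suc algebra_simps)
qed

lemma card_dist_lists: "finite A \<Longrightarrow> k \<le> card A \<Longrightarrow> card {xs. length xs = k \<and> distinct xs \<and> set xs \<subseteq> A} = ffall (card A) k"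
  using card_lists_distinct_length_eq[of A k] ffall_prod[of k "card A"] by simp

lemma card_dtuples: "r \<le> n \<Longrightarrow> card (dtuples n r) = ffall n r"
  unfolding dtuples_def using card_dist_lists[of "{..<n}" r] by simp

lemma finite_dtuples: "finite (dtuples n r)"
proof -
  have "dtuples n r \<subseteq> {xs. set xs \<subseteq> {..<n} \<and> length xs = r}" by (auto simp: dtuples_def)
  moreover have "finite {xs. set xs \<subseteq> {..<n} \<and> length xs = r}" by (rule finite_lists_length_eq) simp
  ultimately show ?thesis by (rule finite_subset)
qed

lemma take_fiber:
  assumes ks: "ks \<in> dtuples n a" and ab: "a + b \<le> n"
  shows "card {js \<in> dtuples n (a + b). take a js = ks} = ffall (n - a) b"
proof -
  let ?R = "{rs. length rs = b \<and> distinct rs \<and> set rs \<subseteq> {..<n} - set ks}"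
  have ks': "distinct ks" "length ks = a" "set ks \<subseteq> {..<n}" using ks by (auto simp: dtuples_def)
  have eq: "{js \<in> dtuples n (a + b). take a js = ks} = (\<lambda>rs. ks @ rs) ` ?R"
  proof (intro equalityI subsetI)
    fix js assume "js \<in> {js \<in> dtuples n (a + b). take a js = ks}"
    then have js: "distinct js" "length js = a + b" "set js \<subseteq> {..<n}" "take a js = ks"
      by (auto simp: dtuples_def)
    have "js = ks @ drop a js" using js(4) by (metis append_take_drop_id)
    moreover have "drop a js \<in> ?R"
    proof -
      have "set (take a js) \<inter> set (drop a js) = {}"
        using set_take_disj_set_drop_if_distinct[OF js(1)] by simp
      then show ?thesis using js set_drop_subset[of a js] by auto
    qed
    ultimately show "js \<in> (\<lambda>rs. ks @ rs) ` ?R" by blast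
  next
    fix js assume "js \<in> (\<lambda>rs. ks @ rs) ` ?R"
    then obtain rs where "rs \<in> ?R" "js = ks @ rs" by blast
    then show "js \<in> {js \<in> dtuples n (a + b). take a js = ks}"
      using ks' by (auto simp: dtuples_def)
  qed
  have inj: "inj_on (\<lambda>rs. ks @ rs) ?R" by (auto simp: inj_on_def)
  have cR: "card ({..<n} - set ks) = n - a"
    using ks' by (simp add: card_Diff_subset distinct_card)
  show ?thesis
    unfolding eq card_image[OF inj] using card_dist_lists[of "{..<n} - set ks" b] cR ab by simp
qed

lemma sum_take:
  fixes f :: "nat list \<Rightarrow> real"
  assumes ab: "a + b \<le> n"
  shows "(\<Sum>js\<in>dtuples n (a + b). f (take a js)) = real (ffall (n - a) b) * (\<Sum>ks\<in>dtuples n a. f ks)"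
proof -
  have img: "take a ` dtuples n (a + b) \<subseteq> dtuples n a"
    by (auto simp: dtuples_def dest: set_take_subset[THEN subsetD])
  have "(\<Sum>js\<in>dtuples n (a + b). f (take a js)) = (\<Sum>ks\<in>dtuples n a. \<Sum>js\<in>{js \<in> dtuples n (a + b). take a js = ks}. f (take a js))"
    by (rule sum.group[symmetric, OF finite_dtuples finite_dtuples img])
  also have "\<dots> = (\<Sum>ks\<in>dtuples n a. real (ffall (n - a) b) * f ks)"
  proof (rule sum.cong[OF refl])
    fix ks assume ks: "ks \<in> dtuples n a"
    have "(\<Sum>js\<in>{js \<in> dtuples n (a + b). take a js = ks}. f (take a js)) = (\<Sum>js\<in>{js \<in> dtuples n (a + b). take a js = ks}. f ks)"
      by (rule sum.cong) auto
    also have "\<dots> = real (ffall (n - a) b) * f ks"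
      using take_fiber[OF ks ab] by simp
    finally show "(\<Sum>js\<in>{js \<in> dtuples n (a + b). take a js = ks}. f (take a js)) = real (ffall (n - a) b) * f ks" .
  qed
  also have "\<dots> = real (ffall (n - a) b) * (\<Sum>ks\<in>dtuples n a. f ks)"
    by (simp add: sum_distrib_left)
  finally show ?thesis .
qed

lemma sum_drop:
  fixes f :: "nat list \<Rightarrow> real"
  assumes ab: "a + b \<le> n"
  shows "(\<Sum>js\<in>dtuples n (a + b). f (drop a js)) = real (ffall (n - b) a) * (\<Sum>ks\<in>dtuples n b. f ks)"
proof -
  have "(\<Sum>js\<in>dtuples n (a + b). f (drop a js)) = (\<Sum>js\<in>dtuples n (b + a). f (take b js))"
  proof (rule sum.reindex_bij_witness[where i="\<lambda>js. drop b js @ take b js" and j="\<lambda>js. drop a js @ take a js"])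
    fix js assume "js \<in> dtuples n (a + b)"
    then have js: "distinct js" "length js = a + b" "set js \<subseteq> {..<n}" by (auto simp: dtuples_def)
    show "drop b (drop a js @ take a js) @ take b (drop a js @ take a js) = js" using js by simp
    have "set (take a js) \<inter> set (drop a js) = {}"
      using set_take_disj_set_drop_if_distinct[OF js(1)] by simp
    then show "drop a js @ take a js \<in> dtuples n (b + a)"
      using js set_take_subset[of a js] set_drop_subset[of a js]
      by (auto simp: dtuples_def)
    show "f (take b (drop a js @ take a js)) = f (drop a js)" using js by simp
  next
    fix js assume "js \<in> dtuples n (b + a)"
    then have js: "distinct js" "length js = b + a" "set js \<subseteq> {..<n}" by (auto simp: dtuples_def)
    show "drop a (drop b js @ take b js) @ take a (drop b js @ take b js) = js" using js by simp
    have "set (take b js) \<inter> set (drop b js) = {}"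
      using set_take_disj_set_drop_if_distinct[OF js(1)] by simp
    then show "drop b js @ take b js \<in> dtuples n (a + b)"
      using js set_take_subset[of b js] set_drop_subset[of b js]
      by (auto simp: dtuples_def)
  qed
  also have "\<dots> = real (ffall (n - b) a) * (\<Sum>ks\<in>dtuples n b. f ks)"
    using sum_take[of b a n f] ab by simp
  finally show ?thesis .
qed


lemma card_perms_set: "finite T \<Longrightarrow> card {xs. distinct xs \<and> set xs = T} = fact (card T)"
proof -
  assume T: "finite T"
  have e: "{xs. distinct xs \<and> set xs = T} = {xs. length xs = card T \<and> distinct xs \<and> set xs \<subseteq> T}"
  proof (intro equalityI subsetI)
    fix xs assume "xs \<in> {xs. distinct xs \<and> set xs = T}"
    then show "xs \<in> {xs. length xs = card T \<and> distinct xs \<and> set xs \<subseteq> T}"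
      by (auto simp: distinct_card)
  next
    fix xs assume xs: "xs \<in> {xs. length xs = card T \<and> distinct xs \<and> set xs \<subseteq> T}"
    then have "card (set xs) = card T" by (auto simp: distinct_card)
    then have "set xs = T" using xs T by (intro card_subset_eq) auto
    then show "xs \<in> {xs. distinct xs \<and> set xs = T}" using xs by auto
  qed
  have "ffall (card T) (card T) * fact 0 = (fact (card T) :: nat)"
    using ffall_fact[of "card T" "card T"] by simp
  then show ?thesis unfolding e using card_dist_lists[OF T, of "card T"] by simp
qed

lemma count_pattern:
  assumes s: "s1 \<subseteq> {..<n}" "s2 \<subseteq> {..<n}" "s1 \<inter> s2 = {}" "card s1 = m" "card s2 = m"
    and mn: "2*m \<le> n" and ab: "a + b \<le> m"
  shows "card {ks \<in> dtuples n m. card (set ks \<inter> s1) = a \<and> card (set ks \<inter> s2) = b}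
       = fact m * (m choose a) * (m choose b) * ((n - 2*m) choose (m - a - b))"
proof -
  define R where "R = {..<n} - (s1 \<union> s2)"
  have fin: "finite s1" "finite s2" "finite R" using s by (auto simp: R_def intro: finite_subset)
  have cR: "card R = n - 2*m"
  proof -
    have "card (s1 \<union> s2) = 2 * m" using s fin by (simp add: card_Un_disjoint)
    moreover have "card ({..<n} - (s1 \<union> s2)) = card {..<n} - card (s1 \<union> s2)"
      by (rule card_Diff_subset) (use fin s in auto)
    ultimately show ?thesis unfolding R_def by simp
  qed
  define TT where "TT = {T. T \<subseteq> {..<n} \<and> card T = m \<and> card (T \<inter> s1) = a \<and> card (T \<inter> s2) = b}"
  define P where "P T = {xs. distinct xs \<and> set xs = T}" for T :: "nat set"
  have eq1: "{ks \<in> dtuples n m. card (set ks \<inter> s1) = a \<and> card (set ks \<inter> s2) = b} = (\<Union>T\<in>TT. P T)"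
  proof (intro equalityI subsetI)
    fix ks assume "ks \<in> {ks \<in> dtuples n m. card (set ks \<inter> s1) = a \<and> card (set ks \<inter> s2) = b}"
    then show "ks \<in> (\<Union>T\<in>TT. P T)"
      by (auto simp: dtuples_def TT_def P_def distinct_card intro!: bexI[of _ "set ks"])
  next
    fix ks assume "ks \<in> (\<Union>T\<in>TT. P T)"
    then show "ks \<in> {ks \<in> dtuples n m. card (set ks \<inter> s1) = a \<and> card (set ks \<inter> s2) = b}"
      by (auto simp: dtuples_def TT_def P_def distinct_card)
  qed
  have finTT: "finite TT"
    by (rule finite_subset[of _ "Pow {..<n}"]) (auto simp: TT_def)
  have finP: "finite (P T)" if "T \<in> TT" for T
  proof -
    have "P T \<subseteq> {xs. set xs \<subseteq> T \<and> length xs = card T}" by (auto simp: P_def distinct_card)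
    moreover have "finite T" using that by (auto simp: TT_def intro: finite_subset)
    then have "finite {xs. set xs \<subseteq> T \<and> length xs = card T}" by (rule finite_lists_length_eq)
    ultimately show ?thesis by (rule finite_subset)
  qed
  have cP: "card (P T) = fact m" if "T \<in> TT" for T
    using that card_perms_set[of T] by (auto simp: TT_def P_def intro: finite_subset)
  have disj: "\<forall>T\<in>TT. \<forall>T'\<in>TT. T \<noteq> T' \<longrightarrow> P T \<inter> P T' = {}"
    by (auto simp: P_def)
  have c1: "card (\<Union>T\<in>TT. P T) = card TT * fact m"
    using card_UN_disjoint[OF finTT _ disj] finP cP by simp
  define AA where "AA = {A. A \<subseteq> s1 \<and> card A = a}"
  define BB where "BB = {B. B \<subseteq> s2 \<and> card B = b}"
  define CC where "CC = {C. C \<subseteq> R \<and> card C = m - a - b}"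
  define U where "U = (\<lambda>(A, B, C). A \<union> B \<union> (C :: nat set))"
  have Rd: "R \<inter> s1 = {}" "R \<inter> s2 = {}" by (auto simp: R_def)
  have eq2: "TT = U ` (AA \<times> BB \<times> CC)"
  proof (intro equalityI subsetI)
    fix T assume T: "T \<in> TT"
    then have T': "T \<subseteq> {..<n}" "card T = m" "card (T \<inter> s1) = a" "card (T \<inter> s2) = b"
      by (auto simp: TT_def)
    have finT: "finite T" using T' by (auto intro: finite_subset)
    have Tsplit: "T = (T \<inter> s1) \<union> (T \<inter> s2) \<union> (T \<inter> R)" using T' by (auto simp: R_def)
    have "card T = card (T \<inter> s1) + card (T \<inter> s2) + card (T \<inter> R)"
    proof -
      have "card ((T \<inter> s1) \<union> (T \<inter> s2) \<union> (T \<inter> R)) = card ((T \<inter> s1) \<union> (T \<inter> s2)) + card (T \<inter> R)"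
        using finT Rd by (intro card_Un_disjoint) auto
      also have "card ((T \<inter> s1) \<union> (T \<inter> s2)) = card (T \<inter> s1) + card (T \<inter> s2)"
        using finT s(3) by (intro card_Un_disjoint) auto
      finally show ?thesis using Tsplit by simp
    qed
    then have "card (T \<inter> R) = m - a - b" using T' by simp
    then have "(T \<inter> s1, T \<inter> s2, T \<inter> R) \<in> AA \<times> BB \<times> CC"
      using T' by (auto simp: AA_def BB_def CC_def)
    moreover have "T = U (T \<inter> s1, T \<inter> s2, T \<inter> R)" using Tsplit by (simp add: U_def)
    ultimately show "T \<in> U ` (AA \<times> BB \<times> CC)" by blast
  next
    fix T assume "T \<in> U ` (AA \<times> BB \<times> CC)"
    then obtain A B C where ABC: "A \<subseteq> s1" "card A = a" "B \<subseteq> s2" "card B = b" "C \<subseteq> R" "card C = m - a - b"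
      and T: "T = A \<union> B \<union> C"
      by (auto simp: AA_def BB_def CC_def U_def)
    have fA: "finite A" "finite B" "finite C" using ABC fin by (auto intro: finite_subset)
    have i1: "T \<inter> s1 = A" using ABC s(3) Rd T by auto
    have i2: "T \<inter> s2 = B" using ABC s(3) Rd T by auto
    have "card T = card (A \<union> B) + card C"
      unfolding T using ABC fA Rd by (intro card_Un_disjoint) auto
    also have "card (A \<union> B) = a + b" using ABC fA s(3) by (subst card_Un_disjoint) auto
    finally have "card T = m" using ABC ab by simp
    moreover have "T \<subseteq> {..<n}" using ABC s T by (auto simp: R_def)
    ultimately show "T \<in> TT" using i1 i2 ABC by (simp add: TT_def)
  qed
  have inj: "inj_on U (AA \<times> BB \<times> CC)"
  proof (rule inj_onI)
    fix x y assume x: "x \<in> AA \<times> BB \<times> CC" and y: "y \<in> AA \<times> BB \<times> CC" and e: "U x = U y"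
    obtain A B C where xe: "x = (A, B, C)" by (cases x) auto
    obtain A' B' C' where ye: "y = (A', B', C')" by (cases y) auto
    have sx: "A \<subseteq> s1" "B \<subseteq> s2" "C \<subseteq> R" using x xe by (auto simp: AA_def BB_def CC_def)
    have sy: "A' \<subseteq> s1" "B' \<subseteq> s2" "C' \<subseteq> R" using y ye by (auto simp: AA_def BB_def CC_def)
    have ee: "A \<union> B \<union> C = A' \<union> B' \<union> C'" using e xe ye by (simp add: U_def)
    have "A = (A \<union> B \<union> C) \<inter> s1" using sx s(3) Rd by auto
    also have "\<dots> = A'" using ee sy s(3) Rd by auto
    finally have 1: "A = A'" .
    have "B = (A \<union> B \<union> C) \<inter> s2" using sx s(3) Rd by auto
    also have "\<dots> = B'" using ee sy s(3) Rd by auto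
    finally have 2: "B = B'" .
    have "C = (A \<union> B \<union> C) \<inter> R" using sx s(3) Rd by auto
    also have "\<dots> = C'" using ee sy s(3) Rd by auto
    finally have 3: "C = C'" .
    show "x = y" using 1 2 3 xe ye by simp
  qed
  have cTT: "card TT = (m choose a) * (m choose b) * ((n - 2*m) choose (m - a - b))"
  proof -
    have "card TT = card (AA \<times> BB \<times> CC)" unfolding eq2 by (rule card_image[OF inj])
    also have "\<dots> = card AA * (card BB * card CC)" by (simp add: card_cartesian_product)
    also have "card AA = m choose a" unfolding AA_def using n_subsets[OF fin(1)] s by simp
    also have "card BB = m choose b" unfolding BB_def using n_subsets[OF fin(2)] s by simp
    also have "card CC = (n - 2*m) choose (m - a - b)" unfolding CC_def using n_subsets[OF fin(3)] cR by simp
    finally show ?thesis by (simp add: ac_simps)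
  qed
  show ?thesis unfolding eq1 c1 cTT by (simp add: ac_simps)
qed

lemma binom_id:
  assumes jc: "1 \<le> j" "j \<le> c" "c \<le> m" and mn: "2*m \<le> n"
  shows "real (fact m * (m choose j) * (m choose (c - j)) * ((n - 2*m) choose (m - c))) / real (ffall n m)
       = real ((n - m) choose (2*m - c)) * real (m choose c) * real (c choose j) * real ((2*m - c) choose (m - j))
         / (real (n choose (2*m)) * real ((2*m) choose m))"
proof (cases "m - c \<le> n - 2*m")
  case False
  have z1: "(n - 2*m) choose (m - c) = 0" using False by simp
  have z2: "(n - m) choose (2*m - c) = 0" using False mn by simp
  show ?thesis unfolding z1 z2 by simp
next
  case True
  have ffn: "real (ffall n m) = fact n / fact (n - m)"
  proof -
    have "real (ffall n m * fact (n - m)) = real (fact n)" using ffall_fact[of m n] mn by simp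
    then have "real (ffall n m) * fact (n - m) = fact n" by simp
    then show ?thesis by (simp add: field_simps)
  qed
  have e1: "m - (c - j) = m + j - c" "2*m - c - (m - j) = m + j - c"
    "n - 2*m - (m - c) = n + c - 3*m" "n - m - (2*m - c) = n + c - 3*m" "2*m - m = m"
    using jc mn True by auto
  have b1: "real (m choose j) = fact m / (fact j * fact (m - j))" using jc by (intro binomial_fact) auto
  have b2: "real (m choose (c - j)) = fact m / (fact (c - j) * fact (m + j - c))"
  proof -
    have cjm: "c - j \<le> m" using jc by arith
    show ?thesis using binomial_fact[OF cjm] e1(1) by simp
  qed
  have b3: "real ((n - 2*m) choose (m - c)) = fact (n - 2*m) / (fact (m - c) * fact (n + c - 3*m))"
    using binomial_fact[of "m - c" "n - 2*m"] True e1 by simp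
  have b4: "real ((n - m) choose (2*m - c)) = fact (n - m) / (fact (2*m - c) * fact (n + c - 3*m))"
  proof -
    have le: "2*m - c \<le> n - m" using True jc mn by arith
    show ?thesis using binomial_fact[OF le] e1(4) by simp
  qed
  have b5: "real (m choose c) = fact m / (fact c * fact (m - c))" using jc by (intro binomial_fact) auto
  have b6: "real (c choose j) = fact c / (fact j * fact (c - j))" using jc by (intro binomial_fact) auto
  have b7: "real ((2*m - c) choose (m - j)) = fact (2*m - c) / (fact (m - j) * fact (m + j - c))"
  proof -
    have le: "m - j \<le> 2*m - c" using jc by arith
    show ?thesis using binomial_fact[OF le] e1(2) by simp
  qed
  have b8: "real (n choose (2*m)) = fact n / (fact (2*m) * fact (n - 2*m))" using mn by (intro binomial_fact) auto
  have b9: "real ((2*m) choose m) = fact (2*m) / (fact m * fact m)"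
    using binomial_fact[of m "2*m"] e1 by simp
  show ?thesis
    unfolding of_nat_mult b1 b2 b3 b4 b5 b6 b7 b8 b9 ffn of_nat_fact
    by (simp add: field_simps)
qed

lemma group_sum:
  fixes z :: "nat \<Rightarrow> nat \<Rightarrow> real" and pa pb :: "'a \<Rightarrow> nat"
  assumes T: "finite T" and le: "\<And>x. x \<in> T \<Longrightarrow> pa x + pb x \<le> m" and z0: "\<And>c. z c 0 = 0"
  shows "(\<Sum>x\<in>T. if pa x + pb x = 0 then 0 else z (pa x + pb x) (pa x))
       = (\<Sum>c=1..m. \<Sum>j=1..c. real (card {x\<in>T. pa x = j \<and> pb x = c - j}) * z c j)"
proof -
  have pt: "(if pa x + pb x = 0 then 0 else z (pa x + pb x) (pa x))
      = (\<Sum>c=1..m. \<Sum>j=1..c. if pa x = j \<and> pb x = c - j then z c j else 0)" if x: "x \<in> T" for x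
  proof -
    define p where "p = pa x"
    define q where "q = pb x"
    have pq: "p + q \<le> m" using le[OF x] by (simp add: p_def q_def)
    have inner: "(\<Sum>j=1..c. if p = j \<and> q = c - j then z c j else 0)
        = (if c = p + q then (if 1 \<le> p then z c p else 0) else 0)" if c: "c \<ge> 1" for c
    proof -
      have "(\<Sum>j=1..c. if p = j \<and> q = c - j then z c j else 0)
          = (\<Sum>j=1..c. if j = p then (if q = c - p then z c p else 0) else 0)"
        by (rule sum.cong) auto
      also have "\<dots> = (if p \<in> {1..c} then (if q = c - p then z c p else 0) else 0)"
        by (rule sum.delta) simp
      also have "\<dots> = (if c = p + q then (if 1 \<le> p then z c p else 0) else 0)"
        using c by auto
      finally show ?thesis .
    qed
    have "(\<Sum>c=1..m. \<Sum>j=1..c. if p = j \<and> q = c - j then z c j else 0)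
        = (\<Sum>c=1..m. if c = p + q then (if 1 \<le> p then z c p else 0) else 0)"
    proof (rule sum.cong[OF refl])
      fix c assume "c \<in> {1..m}"
      then show "(\<Sum>j=1..c. if p = j \<and> q = c - j then z c j else 0)
          = (if c = p + q then (if 1 \<le> p then z c p else 0) else 0)" using inner[of c] by simp
    qed
    also have "\<dots> = (if p + q \<in> {1..m} then (if 1 \<le> p then z (p + q) p else 0) else 0)"
      by (rule sum.delta) simp
    also have "\<dots> = (if p + q = 0 then 0 else z (p + q) p)"
      using pq z0 by (cases "p = 0") auto
    finally show ?thesis by (simp add: p_def q_def)
  qed
  have "(\<Sum>x\<in>T. if pa x + pb x = 0 then 0 else z (pa x + pb x) (pa x))
      = (\<Sum>x\<in>T. \<Sum>c=1..m. \<Sum>j=1..c. if pa x = j \<and> pb x = c - j then z c j else 0)"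
    by (rule sum.cong[OF refl]) (rule pt)
  also have "\<dots> = (\<Sum>c=1..m. \<Sum>x\<in>T. \<Sum>j=1..c. if pa x = j \<and> pb x = c - j then z c j else 0)"
    by (rule sum.swap)
  also have "\<dots> = (\<Sum>c=1..m. \<Sum>j=1..c. \<Sum>x\<in>T. if pa x = j \<and> pb x = c - j then z c j else 0)"
    by (rule sum.cong[OF refl]) (rule sum.swap)
  also have "\<dots> = (\<Sum>c=1..m. \<Sum>j=1..c. real (card {x\<in>T. pa x = j \<and> pb x = c - j}) * z c j)"
  proof (intro sum.cong refl)
    fix c j
    show "(\<Sum>x\<in>T. if pa x = j \<and> pb x = c - j then z c j else 0) = real (card {x\<in>T. pa x = j \<and> pb x = c - j}) * z c j"
      using T by (simp add: sum.inter_filter[symmetric])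
  qed
  finally show ?thesis .
qed

lemma ffall_pos: "r \<le> n \<Longrightarrow> 0 < ffall n r"
  unfolding ffall_def by (intro prod_pos) auto

lemma comb_main:
  fixes z :: "nat \<Rightarrow> nat \<Rightarrow> real"
  assumes m: "1 \<le> m" "2*m \<le> n" and z0: "\<And>c. z c 0 = 0"
  shows "4 / (real (ffall n (2*m)) * real (ffall n m)) *
     (\<Sum>js\<in>dtuples n (2*m). \<Sum>ks\<in>dtuples n m.
        (if card (set ks \<inter> set (take m js)) + card (set ks \<inter> set (drop m js)) = 0 then 0
         else z (card (set ks \<inter> set (take m js)) + card (set ks \<inter> set (drop m js))) (card (set ks \<inter> set (take m js)))))
   = 4 / (real (n choose (2*m)) * real ((2*m) choose m)) *
     (\<Sum>c=1..m. real ((n - m) choose (2*m - c)) * real (m choose c) *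
        (\<Sum>j=1..c. real (c choose j) * real ((2*m - c) choose (m - j)) * z c j))"
proof -
  define N where "N c j = real (fact m * (m choose j) * (m choose (c - j)) * ((n - 2*m) choose (m - c)))" for c j
  define Q where "Q = (\<Sum>c=1..m. \<Sum>j=1..c. N c j * z c j)"
  have inner: "(\<Sum>ks\<in>dtuples n m.
        (if card (set ks \<inter> set (take m js)) + card (set ks \<inter> set (drop m js)) = 0 then 0
         else z (card (set ks \<inter> set (take m js)) + card (set ks \<inter> set (drop m js))) (card (set ks \<inter> set (take m js))))) = Q"
    if js: "js \<in> dtuples n (2*m)" for js
  proof -
    let ?s1 = "set (take m js)"
    let ?s2 = "set (drop m js)"
    have js': "distinct js" "length js = 2*m" "set js \<subseteq> {..<n}" using js by (auto simp: dtuples_def)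
    have s: "?s1 \<subseteq> {..<n}" "?s2 \<subseteq> {..<n}" "?s1 \<inter> ?s2 = {}" "card ?s1 = m" "card ?s2 = m"
      using js' set_take_subset[of m js] set_drop_subset[of m js]
        set_take_disj_set_drop_if_distinct[OF js'(1), of m m]
      by (auto simp: distinct_card)
    have le: "card (set ks \<inter> ?s1) + card (set ks \<inter> ?s2) \<le> m" if ks: "ks \<in> dtuples n m" for ks
    proof -
      have "card (set ks \<inter> ?s1) + card (set ks \<inter> ?s2) = card ((set ks \<inter> ?s1) \<union> (set ks \<inter> ?s2))"
        using s(3) by (intro card_Un_disjoint[symmetric]) auto
      also have "\<dots> \<le> card (set ks)" by (intro card_mono) auto
      also have "\<dots> = m" using ks by (auto simp: dtuples_def distinct_card)
      finally show ?thesis .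
    qed
    have "(\<Sum>ks\<in>dtuples n m. (if card (set ks \<inter> ?s1) + card (set ks \<inter> ?s2) = 0 then 0
         else z (card (set ks \<inter> ?s1) + card (set ks \<inter> ?s2)) (card (set ks \<inter> ?s1))))
       = (\<Sum>c=1..m. \<Sum>j=1..c. real (card {ks\<in>dtuples n m. card (set ks \<inter> ?s1) = j \<and> card (set ks \<inter> ?s2) = c - j}) * z c j)"
      by (rule group_sum[where T="dtuples n m" and m=m and z=z and pa="\<lambda>ks. card (set ks \<inter> ?s1)" and pb="\<lambda>ks. card (set ks \<inter> ?s2)", OF finite_dtuples le z0])
    also have "\<dots> = Q" unfolding Q_def
    proof (intro sum.cong refl)
      fix c j assume c: "c \<in> {1..m}" and j: "j \<in> {1..c}"
      have "card {ks\<in>dtuples n m. card (set ks \<inter> ?s1) = j \<and> card (set ks \<inter> ?s2) = c - j}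
          = fact m * (m choose j) * (m choose (c - j)) * ((n - 2*m) choose (m - j - (c - j)))"
        using c j by (intro count_pattern[OF s m(2)]) auto
      also have "m - j - (c - j) = m - c" using c j by auto
      finally show "real (card {ks\<in>dtuples n m. card (set ks \<inter> ?s1) = j \<and> card (set ks \<inter> ?s2) = c - j}) * z c j = N c j * z c j"
        by (simp add: N_def)
    qed
    finally show ?thesis .
  qed
  have F2: "0 < real (ffall n (2*m))" using ffall_pos[OF m(2)] by simp
  have F1: "0 < real (ffall n m)" using ffall_pos[of m n] m by simp
  have "(\<Sum>js\<in>dtuples n (2*m). \<Sum>ks\<in>dtuples n m.
        (if card (set ks \<inter> set (take m js)) + card (set ks \<inter> set (drop m js)) = 0 then 0
         else z (card (set ks \<inter> set (take m js)) + card (set ks \<inter> set (drop m js))) (card (set ks \<inter> set (take m js)))))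
      = (\<Sum>js\<in>dtuples n (2*m). Q)"
    by (rule sum.cong[OF refl]) (rule inner)
  also have "\<dots> = real (ffall n (2*m)) * Q" using card_dtuples[OF m(2)] by simp
  finally have L: "4 / (real (ffall n (2*m)) * real (ffall n m)) *
     (\<Sum>js\<in>dtuples n (2*m). \<Sum>ks\<in>dtuples n m.
        (if card (set ks \<inter> set (take m js)) + card (set ks \<inter> set (drop m js)) = 0 then 0
         else z (card (set ks \<inter> set (take m js)) + card (set ks \<inter> set (drop m js))) (card (set ks \<inter> set (take m js)))))
      = (\<Sum>c=1..m. \<Sum>j=1..c. 4 * (N c j / real (ffall n m)) * z c j)"
    using F2 F1 by (simp add: Q_def sum_distrib_left field_simps)
  have R: "4 / (real (n choose (2*m)) * real ((2*m) choose m)) *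
     (\<Sum>c=1..m. real ((n - m) choose (2*m - c)) * real (m choose c) *
        (\<Sum>j=1..c. real (c choose j) * real ((2*m - c) choose (m - j)) * z c j))
     = (\<Sum>c=1..m. \<Sum>j=1..c. 4 * (real ((n - m) choose (2*m - c)) * real (m choose c) * real (c choose j) * real ((2*m - c) choose (m - j))
         / (real (n choose (2*m)) * real ((2*m) choose m))) * z c j)"
    by (simp add: sum_distrib_left field_simps)
  show ?thesis unfolding L R
  proof (intro sum.cong refl)
    fix c j assume c: "c \<in> {1..m}" and j: "j \<in> {1..c}"
    show "4 * (N c j / real (ffall n m)) * z c j = 4 * (real ((n - m) choose (2*m - c)) * real (m choose c) * real (c choose j) * real ((2*m - c) choose (m - j))
         / (real (n choose (2*m)) * real ((2*m) choose m))) * z c j"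
      unfolding N_def using binom_id[of j c m n] c j m by simp
  qed
qed

definition depon :: "nat set \<Rightarrow> ((nat \<Rightarrow> 'e) \<Rightarrow> real) \<Rightarrow> bool" where
  "depon K F \<longleftrightarrow> (\<forall>x y. (\<forall>l\<in>K. x l = y l) \<longrightarrow> F x = F y)"

definition Hf :: "nat \<Rightarrow> ((nat \<Rightarrow> 'e) \<Rightarrow> real) \<Rightarrow> nat list \<Rightarrow> (nat \<Rightarrow> 'e) \<Rightarrow> real" where
  "Hf m h S x = h (\<lambda>l\<in>{..<m}. x (S ! l))"

lemma sym_perm_aux:
  fixes S S' :: "'b list"
  assumes S: "distinct S" "length S = m" and S': "distinct S'" "length S' = m"
    and eq: "set S = set S'"
  defines "\<sigma> \<equiv> (\<lambda>l. if l < m then the_inv_into {..<m} ((!) S') (S ! l) else l)"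
  shows "\<sigma> permutes {..<m}" "\<And>l. l < m \<Longrightarrow> S' ! \<sigma> l = S ! l" "\<And>l. l < m \<Longrightarrow> \<sigma> l < m"
proof -
  have injS': "inj_on ((!) S') {..<m}" using S' by (simp add: inj_on_def nth_eq_iff_index_eq)
  have imS': "(!) S' ` {..<m} = set S'" using S' by (auto simp: in_set_conv_nth)
  have mem: "S ! l \<in> (!) S' ` {..<m}" if "l < m" for l
    using that S eq imS' by (metis nth_mem)
  show \<sigma>in: "\<sigma> l < m" if "l < m" for l
    using the_inv_into_into[OF injS' mem[OF that], of "{..<m}"] that by (simp add: \<sigma>_def)
  show \<sigma>nth: "S' ! \<sigma> l = S ! l" if "l < m" for l
    using f_the_inv_into_f[OF injS' mem[OF that]] that by (simp add: \<sigma>_def)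
  have inj: "inj_on \<sigma> {..<m}"
  proof (rule inj_onI)
    fix a b assume ab: "a \<in> {..<m}" "b \<in> {..<m}" "\<sigma> a = \<sigma> b"
    then have "S ! a = S ! b" using \<sigma>nth by (metis lessThan_iff)
    then show "a = b" using S ab by (metis lessThan_iff nth_eq_iff_index_eq)
  qed
  have img: "\<sigma> ` {..<m} = {..<m}"
    using inj \<sigma>in by (intro endo_inj_surj) auto
  show "\<sigma> permutes {..<m}"
    by (rule bij_imp_permutes) (use inj img in \<open>simp add: bij_betw_def\<close>, simp add: \<sigma>_def)
qed

locale US = prob_space M for M :: "'a measure" +
  fixes N :: "'e measure" and X :: "nat \<Rightarrow> 'a \<Rightarrow> 'e" and h :: "(nat \<Rightarrow> 'e) \<Rightarrow> real"
    and m n :: nat and \<theta> :: real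
  assumes m1: "1 \<le> m" and mn: "2*m \<le> n"
  and hmeas: "h \<in> borel_measurable (PiM {..<m} (\<lambda>_. N))"
  and sym: "symmetric_kernel m N h"
  and Xmeas: "\<And>l. l < n \<Longrightarrow> X l \<in> measurable M N"
  and ident: "\<And>l. l < n \<Longrightarrow> distr M N (X l) = distr M N (X 0)"
  and law: "distr M (PiM {..<n} (\<lambda>_. N)) (\<lambda>\<omega>. \<lambda>l\<in>{..<n}. X l \<omega>) = PiM {..<n} (\<lambda>_. distr M N (X 0))"
  and sq: "integrable M (\<lambda>\<omega>. (happ m h (\<lambda>l. X l \<omega>))\<^sup>2)"
  and th: "\<theta> = (\<integral>\<omega>. happ m h (\<lambda>l. X l \<omega>) \<partial>M)"
begin

abbreviation "D \<equiv> distr M N (X 0)"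
abbreviation PP :: "nat set \<Rightarrow> (nat \<Rightarrow> 'e) measure" where "PP I \<equiv> PiM I (\<lambda>_. D)"
abbreviation PN :: "nat set \<Rightarrow> (nat \<Rightarrow> 'e) measure" where "PN I \<equiv> PiM I (\<lambda>_. N)"

lemma n_pos: "0 < n" using m1 mn by auto

lemma X0meas: "X 0 \<in> measurable M N" using Xmeas n_pos by auto

lemma probD: "prob_space D"
  by (rule prob_space_distr[OF X0meas])

lemma sets_D[measurable_cong]: "sets D = sets N" by simp

lemma sets_PP: "sets (PP I) = sets (PN I)"
  by (intro sets_PiM_cong) auto

lemma space_PP: "space (PP I) = space (PN I)"
  using sets_PP sets_eq_imp_space_eq by blast

lemma meas_PP: "measurable (PP I) K = measurable (PN I) K"
  by (rule measurable_cong_sets[OF sets_PP refl])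

lemma prob_PP: "prob_space (PP I)"
  by (intro prob_space_PiM probD)

lemma law_gen:
  assumes f: "inj_on f J" "f ` J \<subseteq> {..<n}"
  shows "distr M (PN J) (\<lambda>\<omega>. \<lambda>l\<in>J. X (f l) \<omega>) = PP J"
proof -
  have meas: "(\<lambda>\<omega>. \<lambda>l\<in>{..<n}. X l \<omega>) \<in> measurable M (PN {..<n})"
    by (intro measurable_restrict Xmeas) auto
  have r: "(\<lambda>z. \<lambda>l\<in>J. z (f l)) \<in> measurable (PN {..<n}) (PN J)"
    using f by (intro measurable_restrict measurable_component_singleton) auto
  have "distr M (PN J) (\<lambda>\<omega>. \<lambda>l\<in>J. X (f l) \<omega>)
      = distr (distr M (PN {..<n}) (\<lambda>\<omega>. \<lambda>l\<in>{..<n}. X l \<omega>)) (PN J) (\<lambda>z. \<lambda>l\<in>J. z (f l))"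
    apply (subst distr_distr[OF r meas])
    apply (rule distr_cong)
    using f by (auto simp: comp_def restrict_def fun_eq_iff image_subset_iff)
  also have "\<dots> = distr (PP {..<n}) (PP J) (\<lambda>z. \<lambda>l\<in>J. z (f l))"
    unfolding law by (rule distr_cong) (auto simp: sets_PP)
  also have "\<dots> = PP J"
    using distr_PiM_reindex[of "{..<n}" "\<lambda>_. D" f J] f probD by auto
  finally show ?thesis .
qed

lemma transfer_int:
  fixes F :: "(nat \<Rightarrow> 'e) \<Rightarrow> real"
  assumes f: "inj_on f J" "f ` J \<subseteq> {..<n}" and F: "F \<in> borel_measurable (PN J)"
  shows "(\<integral>\<omega>. F (\<lambda>l\<in>J. X (f l) \<omega>) \<partial>M) = integral\<^sup>L (PP J) F"
    and "integrable M (\<lambda>\<omega>. F (\<lambda>l\<in>J. X (f l) \<omega>)) \<longleftrightarrow> integrable (PP J) F"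
proof -
  have meas: "(\<lambda>\<omega>. \<lambda>l\<in>J. X (f l) \<omega>) \<in> measurable M (PN J)"
    using f by (intro measurable_restrict Xmeas) auto
  show "(\<integral>\<omega>. F (\<lambda>l\<in>J. X (f l) \<omega>) \<partial>M) = integral\<^sup>L (PP J) F"
    using integral_distr[OF meas F] law_gen[OF f] by simp
  show "integrable M (\<lambda>\<omega>. F (\<lambda>l\<in>J. X (f l) \<omega>)) \<longleftrightarrow> integrable (PP J) F"
    using integrable_distr_eq[OF meas F] law_gen[OF f] by simp
qed


lemma Xspace: "l < n \<Longrightarrow> \<omega> \<in> space M \<Longrightarrow> X l \<omega> \<in> space N"
  by (rule measurable_space[OF Xmeas])

lemma Hf_meas:
  assumes "\<And>l. l < m \<Longrightarrow> S ! l \<in> I"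
  shows "Hf m h S \<in> borel_measurable (PN I)"
proof -
  have "(\<lambda>x. \<lambda>l\<in>{..<m}. x (S ! l)) \<in> measurable (PN I) (PN {..<m})"
    using assms by (intro measurable_restrict measurable_component_singleton) auto
  from measurable_comp[OF this hmeas] show ?thesis unfolding Hf_def[abs_def] by (simp add: comp_def)
qed

lemma Hf_meas_PP:
  assumes "\<And>l. l < m \<Longrightarrow> S ! l \<in> I"
  shows "Hf m h S \<in> borel_measurable (PP I)"
  using Hf_meas[OF assms] by (simp add: meas_PP)

lemma sym_perm:
  assumes S: "distinct S" "length S = m" and S': "distinct S'" "length S' = m"
    and eq: "set S = set S'" and x: "\<And>l. l \<in> set S \<Longrightarrow> x l \<in> space N"
  shows "Hf m h S x = Hf m h S' x"
proof -
  obtain \<sigma> where aux: "\<sigma> permutes {..<m}" "\<And>l. l < m \<Longrightarrow> S' ! \<sigma> l = S ! l" "\<And>l. l < m \<Longrightarrow> \<sigma> l < m"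
    using sym_perm_aux[OF S S' eq] by blast
  define x0 where "x0 = (\<lambda>l\<in>{..<m}. x (S' ! l))"
  have x0sp: "x0 \<in> space (PN {..<m})"
    using x S' eq by (auto simp: x0_def space_PiM PiE_iff)
  have "h (\<lambda>l\<in>{..<m}. x0 (\<sigma> l)) = h x0"
    using sym x0sp aux(1) unfolding symmetric_kernel_def by blast
  moreover have "(\<lambda>l\<in>{..<m}. x0 (\<sigma> l)) = (\<lambda>l\<in>{..<m}. x (S ! l))"
    using aux(2,3) by (auto simp: x0_def fun_eq_iff)
  ultimately show ?thesis by (simp add: Hf_def x0_def)
qed

lemma happ_Hf: "happ m h (\<lambda>l. X (S ! l) \<omega>) = Hf m h S (\<lambda>l. X l \<omega>)"
  by (simp add: happ_def Hf_def)

lemma Hf_restrict: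
  assumes "\<And>l. l < m \<Longrightarrow> S ! l \<in> I"
  shows "Hf m h S (restrict x I) = Hf m h S x"
  using assms unfolding Hf_def by (intro arg_cong[where f=h]) (auto simp: fun_eq_iff)

definition "dtl I = {S. distinct S \<and> length S = m \<and> set S \<subseteq> I}"

lemma dtl_nth: "S \<in> dtl I \<Longrightarrow> l < m \<Longrightarrow> S ! l \<in> I"
  by (auto simp: dtl_def)

lemma H_transfer:
  fixes F :: "real \<Rightarrow> real"
  assumes S: "S \<in> dtl {..<n}" and F: "F \<in> borel_measurable borel"
  shows "(\<integral>\<omega>. F (Hf m h S (\<lambda>l. X l \<omega>)) \<partial>M) = (\<integral>\<omega>. F (happ m h (\<lambda>l. X l \<omega>)) \<partial>M)"
    and "integrable M (\<lambda>\<omega>. F (Hf m h S (\<lambda>l. X l \<omega>))) \<longleftrightarrow> integrable M (\<lambda>\<omega>. F (happ m h (\<lambda>l. X l \<omega>)))"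
proof -
  have Fh: "(\<lambda>x. F (h x)) \<in> borel_measurable (PN {..<m})"
    using measurable_comp[OF hmeas F] by (simp add: comp_def)
  have inj: "inj_on ((!) S) {..<m}" "(!) S ` {..<m} \<subseteq> {..<n}"
    using S by (auto simp: dtl_def inj_on_def nth_eq_iff_index_eq dest!: nth_mem)
  have inj0: "inj_on id {..<m}" "id ` {..<m} \<subseteq> {..<n}" using mn by auto
  have e1: "Hf m h S (\<lambda>l. X l \<omega>) = h (\<lambda>l\<in>{..<m}. X (S ! l) \<omega>)" for \<omega> by (simp add: Hf_def)
  have e2: "happ m h (\<lambda>l. X l \<omega>) = h (\<lambda>l\<in>{..<m}. X (id l) \<omega>)" for \<omega> by (simp add: happ_def)
  show "(\<integral>\<omega>. F (Hf m h S (\<lambda>l. X l \<omega>)) \<partial>M) = (\<integral>\<omega>. F (happ m h (\<lambda>l. X l \<omega>)) \<partial>M)"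
    unfolding e1 e2 transfer_int(1)[OF inj Fh] transfer_int(1)[OF inj0 Fh] ..
  show "integrable M (\<lambda>\<omega>. F (Hf m h S (\<lambda>l. X l \<omega>))) \<longleftrightarrow> integrable M (\<lambda>\<omega>. F (happ m h (\<lambda>l. X l \<omega>)))"
    unfolding e1 e2 transfer_int(2)[OF inj Fh] transfer_int(2)[OF inj0 Fh] ..
qed

lemma happ_meas: "(\<lambda>\<omega>. happ m h (\<lambda>l. X l \<omega>)) \<in> borel_measurable M"
proof -
  have "(\<lambda>\<omega>. \<lambda>l\<in>{..<m}. X l \<omega>) \<in> measurable M (PN {..<m})"
    using mn by (intro measurable_restrict Xmeas) auto
  from measurable_comp[OF this hmeas] show ?thesis by (simp add: happ_def comp_def)
qed

lemma happ_int: "integrable M (\<lambda>\<omega>. happ m h (\<lambda>l. X l \<omega>))"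
  using square_integrable_imp_integrable[OF happ_meas sq] .

lemma H_sq_int: "S \<in> dtl {..<n} \<Longrightarrow> integrable M (\<lambda>\<omega>. (Hf m h S (\<lambda>l. X l \<omega>))\<^sup>2)"
  using H_transfer(2)[of S "\<lambda>x. x\<^sup>2"] sq by simp

lemma H_int: "S \<in> dtl {..<n} \<Longrightarrow> integrable M (\<lambda>\<omega>. Hf m h S (\<lambda>l. X l \<omega>))"
  using H_transfer(2)[of S "\<lambda>x. x"] happ_int by simp

lemma H_exp: "S \<in> dtl {..<n} \<Longrightarrow> (\<integral>\<omega>. Hf m h S (\<lambda>l. X l \<omega>) \<partial>M) = \<theta>"
  using H_transfer(1)[of S "\<lambda>x. x"] th by simp

lemma H_meas: "S \<in> dtl {..<n} \<Longrightarrow> (\<lambda>\<omega>. Hf m h S (\<lambda>l. X l \<omega>)) \<in> borel_measurable M"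
  using H_int borel_measurable_integrable by blast


lemma ps: "product_sigma_finite (\<lambda>_. D)"
  unfolding product_sigma_finite_def using probD prob_space_imp_sigma_finite by blast

lemma pairPP: "pair_sigma_finite (PP K) (PP Q)"
  unfolding pair_sigma_finite_def using prob_PP prob_space_imp_sigma_finite by blast

lemma merge_K: "l \<in> K \<Longrightarrow> merge K Q (x, y) l = x l"
  by (simp add: merge_def)

lemma merge_Q: "l \<notin> K \<Longrightarrow> l \<in> Q \<Longrightarrow> merge K Q (x, y) l = y l"
  by (simp add: merge_def)

lemma int_pair:
  fixes F :: "(nat \<Rightarrow> 'e) \<Rightarrow> real"
  assumes K: "finite K" "finite Q" "K \<inter> Q = {}" and int: "integrable (PP (K \<union> Q)) F"
  shows "integrable (PP K \<Otimes>\<^sub>M PP Q) (\<lambda>p. F (merge K Q p))"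
proof -
  have Fm: "F \<in> borel_measurable (PP (K \<union> Q))" using int by auto
  show ?thesis
    by (rule integrable_distr[OF measurable_merge])
       (simp add: product_sigma_finite.distr_merge[OF ps K(3) K(1) K(2)] int)
qed

lemma fub:
  fixes F R :: "(nat \<Rightarrow> 'e) \<Rightarrow> real"
  assumes K: "finite K" "finite Q" "K \<inter> Q = {}"
    and dep: "depon K R"
    and int: "integrable (PP (K \<union> Q)) (\<lambda>z. F z * R z)"
  shows "integrable (PP K) (\<lambda>x. (\<integral>y. F (merge K Q (x, y)) \<partial>PP Q) * R x)"
    and "(\<integral>z. F z * R z \<partial>PP (K \<union> Q)) = (\<integral>x. (\<integral>y. F (merge K Q (x, y)) \<partial>PP Q) * R x \<partial>PP K)"
proof -
  have Rm: "R (merge K Q (x, y)) = R x" for x y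
    using dep unfolding depon_def by (metis merge_K)
  have inner: "(\<integral>y. F (merge K Q (x, y)) * R (merge K Q (x, y)) \<partial>PP Q) = (\<integral>y. F (merge K Q (x, y)) \<partial>PP Q) * R x" for x
    unfolding Rm by (rule integral_mult_left_zero)
  have "(\<integral>z. F z * R z \<partial>PP (K \<union> Q)) = (\<integral>x. (\<integral>y. F (merge K Q (x, y)) * R (merge K Q (x, y)) \<partial>PP Q) \<partial>PP K)"
    by (rule product_sigma_finite.product_integral_fold[OF ps K(3) K(1) K(2) int])
  then show "(\<integral>z. F z * R z \<partial>PP (K \<union> Q)) = (\<integral>x. (\<integral>y. F (merge K Q (x, y)) \<partial>PP Q) * R x \<partial>PP K)"
    unfolding inner .
  have "integrable (PP K) (\<lambda>x. \<integral>y. F (merge K Q (x, y)) * R (merge K Q (x, y)) \<partial>PP Q)"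
    using pair_sigma_finite.integrable_fst'[OF pairPP int_pair[OF K int]] by simp
  then show "integrable (PP K) (\<lambda>x. (\<integral>y. F (merge K Q (x, y)) \<partial>PP Q) * R x)"
    unfolding inner .
qed

definition Gi :: "nat set \<Rightarrow> nat set \<Rightarrow> nat list \<Rightarrow> (nat \<Rightarrow> 'e) \<Rightarrow> real" where
  "Gi K Q S x = (\<integral>y. Hf m h S (merge K Q (x, y)) - \<theta> \<partial>PP Q)"

lemma Hf_cong: "(\<And>l. l \<in> set S \<Longrightarrow> x l = x' l) \<Longrightarrow> length S = m \<Longrightarrow> Hf m h S x = Hf m h S x'"
  unfolding Hf_def by (intro arg_cong[where f=h]) (auto simp: fun_eq_iff)

lemma Gi_K:
  assumes "set S \<inter> K = set S \<inter> K'" "K \<inter> Q = {}" "K' \<inter> Q = {}" "length S = m"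
  shows "Gi K Q S x = Gi K' Q S x"
proof -
  have "Hf m h S (merge K Q (x, y)) = Hf m h S (merge K' Q (x, y))" for y
    using assms by (intro Hf_cong) (auto simp: merge_def)
  then show ?thesis unfolding Gi_def by simp
qed

lemma hcond0: "hcond m D h 0 x = \<theta>"
proof -
  have "hcond m D h 0 x = (\<integral>z. h z \<partial>PP {..<m})"
    unfolding hcond_def happ_def atLeast0LessThan
  proof (rule Bochner_Integration.integral_cong[OF refl])
    fix y assume "y \<in> space (PP {..<m})"
    then have "(\<lambda>l\<in>{..<m}. if l < 0 then x l else y l) = y"
      by (auto simp: space_PiM PiE_def extensional_def fun_eq_iff)
    then show "h (\<lambda>l\<in>{..<m}. if l < 0 then x l else y l) = h y" by simp
  qed
  also have "\<dots> = (\<integral>\<omega>. h (\<lambda>l\<in>{..<m}. X (id l) \<omega>) \<partial>M)"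
    using mn by (intro transfer_int(1)[symmetric] hmeas) auto
  also have "\<dots> = \<theta>" by (simp add: th happ_def)
  finally show ?thesis .
qed

lemma int_const_PP[simp]: "integrable (PP Q) (\<lambda>_. c::real)"
  using prob_PP[of Q] by (intro finite_measure.integrable_const) (simp add: prob_space.finite_measure)

lemma integral_const_PP[simp]: "(\<integral>y. (c::real) \<partial>PP Q) = c"
  by (simp add: prob_space.prob_space[OF prob_PP])

lemma space_PP_N: "x \<in> space (PP K) \<Longrightarrow> l \<in> K \<Longrightarrow> x l \<in> space N"
  by (auto simp: space_PiM PiE_def)

lemma G_htil:
  assumes S: "distinct S" "length S = m" and KQ: "K \<inter> Q = {}" and Q: "Q = set S - K"
    and as: "distinct as" "set as = set S \<inter> K"
    and x: "\<And>l. l \<in> set S \<inter> K \<Longrightarrow> x l \<in> space N"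
    and int: "integrable (PP Q) (\<lambda>y. Hf m h S (merge K Q (x, y)))"
  shows "Gi K Q S x = htil m D h \<theta> (length as) (\<lambda>l. x (as ! l))"
proof -
  define c where "c = length as"
  have finQ: "finite Q" using Q by auto
  define qs where "qs = sorted_list_of_set Q"
  have qs: "distinct qs" "set qs = Q" using finQ by (auto simp: qs_def)
  have cS: "card (set S) = m" using S distinct_card by metis
  have cas: "card (set as) = c" using as distinct_card c_def by metis
  have lqs: "length qs = m - c"
  proof -
    have "length qs = card Q" using qs distinct_card by metis
    also have "Q = set S - (set S \<inter> K)" using Q by auto
    also have "card \<dots> = card (set S) - card (set S \<inter> K)"
      by (rule card_Diff_subset) auto
    finally show ?thesis using cS cas as by simp
  qed
  have c_le: "c \<le> m"
  proof -
    have "card (set as) \<le> card (set S)" using as by (intro card_mono) auto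
    then show ?thesis using cS cas by simp
  qed
  define S' where "S' = as @ qs"
  have S': "distinct S'" "length S' = m" "set S' = set S"
    using as qs lqs c_le Q KQ by (auto simp: S'_def c_def)
  define xa where "xa = (\<lambda>l. x (as ! l))"
  define Fz where "Fz = (\<lambda>z. h (\<lambda>l\<in>{..<m}. if l < c then xa l else z l))"
  have xa_sp: "xa l \<in> space N" if "l < c" for l
    using x as that unfolding xa_def c_def by (metis nth_mem)
  have step1: "Hf m h S (merge K Q (x, y)) = Fz (\<lambda>l\<in>{c..<m}. y (qs ! (l - c)))"
    if y: "y \<in> space (PP Q)" for y
  proof -
    have "Hf m h S (merge K Q (x, y)) = Hf m h S' (merge K Q (x, y))"
    proof (rule sym_perm[OF S S'(1,2) S'(3)[symmetric]])
      fix l assume l: "l \<in> set S"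
      show "merge K Q (x, y) l \<in> space N"
      proof (cases "l \<in> K")
        case True then show ?thesis using x l by (simp add: merge_K)
      next
        case False then have "l \<in> Q" using l Q by auto
        then show ?thesis using False y by (simp add: merge_Q space_PP_N)
      qed
    qed
    also have "\<dots> = Fz (\<lambda>l\<in>{c..<m}. y (qs ! (l - c)))"
      unfolding Hf_def Fz_def
    proof (intro arg_cong[where f=h] ext)
      fix l show "(\<lambda>l\<in>{..<m}. merge K Q (x, y) (S' ! l)) l =
        (\<lambda>l\<in>{..<m}. if l < c then xa l else (\<lambda>l\<in>{c..<m}. y (qs ! (l - c))) l) l"
      proof (cases "l < c")
        case True
        then have "as ! l \<in> K" using as c_def by (metis IntE nth_mem)
        then show ?thesis using True c_le by (simp add: S'_def nth_append c_def xa_def merge_K)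
      next
        case False
        show ?thesis
        proof (cases "l < m")
          case True
          have "qs ! (l - c) \<in> Q" using qs lqs False True by (metis diff_less_mono nth_mem not_less)
          then have "qs ! (l - c) \<notin> K" using KQ by auto
          then show ?thesis using False True \<open>qs ! (l - c) \<in> Q\<close>
            by (simp add: S'_def nth_append c_def merge_Q)
        qed simp
      qed
    qed
    finally show ?thesis .
  qed
  have f_inj: "inj_on (\<lambda>l. qs ! (l - c)) {c..<m}"
    using qs lqs by (auto simp: inj_on_def nth_eq_iff_index_eq)
  have f_into: "(\<lambda>l. qs ! (l - c)) \<in> {c..<m} \<rightarrow> Q"
    using qs lqs by auto
  have reindex: "distr (PP Q) (PP {c..<m}) (\<lambda>y. \<lambda>l\<in>{c..<m}. y (qs ! (l - c))) = PP {c..<m}"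
    using distr_PiM_reindex[of Q "\<lambda>_. D" "\<lambda>l. qs ! (l - c)" "{c..<m}"] f_inj f_into probD by simp
  have rmeas: "(\<lambda>y. \<lambda>l\<in>{c..<m}. y (qs ! (l - c))) \<in> measurable (PP Q) (PP {c..<m})"
    using f_into by (intro measurable_restrict measurable_component_singleton) auto
  have Fzm: "Fz \<in> borel_measurable (PP {c..<m})"
  proof -
    have "(\<lambda>z. \<lambda>l\<in>{..<m}. if l < c then xa l else z l) \<in> measurable (PN {c..<m}) (PN {..<m})"
    proof (intro measurable_restrict)
      fix l assume "l \<in> {..<m}"
      then show "(\<lambda>z. if l < c then xa l else z l) \<in> measurable (PN {c..<m}) N"
        by (cases "l < c") (auto simp: xa_sp)
    qed
    from measurable_comp[OF this hmeas] show ?thesis unfolding Fz_def meas_PP by (simp add: comp_def)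
  qed
  have "(\<integral>y. Hf m h S (merge K Q (x, y)) \<partial>PP Q) = (\<integral>y. Fz (\<lambda>l\<in>{c..<m}. y (qs ! (l - c))) \<partial>PP Q)"
    by (rule Bochner_Integration.integral_cong[OF refl]) (rule step1)
  also have "\<dots> = (\<integral>z. Fz z \<partial>PP {c..<m})"
    using integral_distr[OF rmeas Fzm] reindex by simp
  also have "\<dots> = hcond m D h c xa"
    unfolding hcond_def happ_def Fz_def ..
  finally have eq: "(\<integral>y. Hf m h S (merge K Q (x, y)) \<partial>PP Q) = hcond m D h c xa" .
  have "Gi K Q S x = (\<integral>y. Hf m h S (merge K Q (x, y)) \<partial>PP Q) - \<theta>"
  proof -
    have "Gi K Q S x = (\<integral>y. Hf m h S (merge K Q (x, y)) \<partial>PP Q) - (\<integral>y. \<theta> \<partial>PP Q)"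
      unfolding Gi_def using int by (intro Bochner_Integration.integral_diff) auto
    moreover have "(\<integral>y. \<theta> \<partial>PP Q) = \<theta>"
      by (simp add: prob_space.prob_space[OF prob_PP])
    ultimately show ?thesis by simp
  qed
  also have "\<dots> = htil m D h \<theta> c xa"
    unfolding eq htil_def using hcond0 by simp
  finally show ?thesis by (simp add: c_def xa_def)
qed

lemma AE_Hint:
  assumes S: "S \<in> dtl {..<n}" and K: "finite K" "K \<subseteq> {..<n}" and Q: "Q = set S - K"
  shows "AE x in PP K. integrable (PP Q) (\<lambda>y. Hf m h S (merge K Q (x, y)))"
proof -
  have KQ: "K \<inter> Q = {}" "finite Q" using Q by auto
  have sub: "K \<union> Q \<subseteq> {..<n}" using K S Q by (auto simp: dtl_def)
  have nth: "\<And>l. l < m \<Longrightarrow> S ! l \<in> K \<union> Q" using S Q by (auto simp: dtl_def)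
  have "integrable M (\<lambda>\<omega>. Hf m h S (\<lambda>l\<in>K \<union> Q. X (id l) \<omega>))"
    using H_int[OF S] Hf_restrict[OF nth] by simp
  then have "integrable (PP (K \<union> Q)) (Hf m h S)"
    using transfer_int(2)[of id "K \<union> Q" "Hf m h S"] sub Hf_meas[OF nth] by simp
  from int_pair[OF K(1) KQ(2) KQ(1) this]
  show ?thesis by (rule pair_sigma_finite.AE_integrable_fst'[OF pairPP])
qed

lemma G_ae:
  assumes S: "S \<in> dtl {..<n}" and K: "finite K" "K \<subseteq> {..<n}" and Q: "Q = set S - K"
    and as: "distinct as" "set as = set S \<inter> K"
  shows "AE x in PP K. Gi K Q S x = htil m D h \<theta> (length as) (\<lambda>l. x (as ! l))"
  using AE_Hint[OF S K Q] AE_space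
proof eventually_elim
  case (elim x)
  show ?case
    using S Q as elim by (intro G_htil) (auto simp: dtl_def space_PP_N)
qed

lemma indepX: "indep_vars (\<lambda>_. N) X {..<n}"
proof -
  define X' where "X' l = X (if l < n then l else 0)" for l
  have rv: "random_variable N (X' l)" for l
    using Xmeas n_pos by (simp add: X'_def)
  have eq1: "(\<lambda>x. \<lambda>i\<in>{..<n}. X' i x) = (\<lambda>x. \<lambda>i\<in>{..<n}. X i x)"
    by (auto simp: X'_def fun_eq_iff)
  have eq2: "PiM {..<n} (\<lambda>i. distr M N (X' i)) = PiM {..<n} (\<lambda>_. D)"
  proof (rule PiM_cong[OF refl])
    fix i assume "i \<in> {..<n}"
    then show "distr M N (X' i) = D" using ident[of i] by (simp add: X'_def)
  qed
  have ne: "{..<n} \<noteq> {}" using n_pos by auto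
  have "distr M (PN {..<n}) (\<lambda>x. \<lambda>i\<in>{..<n}. X' i x) = PiM {..<n} (\<lambda>i. distr M N (X' i))"
    unfolding eq1 eq2 law ..
  then have "indep_vars (\<lambda>_. N) X' {..<n}"
    by (rule iffD2[OF indep_vars_iff_distr_eq_PiM[OF ne rv]])
  moreover have "indep_vars (\<lambda>_. N) X' {..<n} = indep_vars (\<lambda>_. N) X {..<n}"
    by (rule indep_vars_cong) (auto simp: X'_def)
  ultimately show ?thesis by simp
qed

lemma abs_mult_le_sq: "\<bar>(a::real) * b\<bar> \<le> a\<^sup>2 + b\<^sup>2"
proof -
  have "0 \<le> (\<bar>a\<bar> - \<bar>b\<bar>)\<^sup>2" by simp
  then have "2 * (\<bar>a\<bar> * \<bar>b\<bar>) \<le> a\<^sup>2 + b\<^sup>2" by (simp add: power2_eq_square algebra_simps)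
  moreover have "0 \<le> \<bar>a\<bar> * \<bar>b\<bar>" by simp
  ultimately have "\<bar>a\<bar> * \<bar>b\<bar> \<le> a\<^sup>2 + b\<^sup>2" by linarith
  then show ?thesis by (simp add: abs_mult)
qed

lemma g_sq_int: "S \<in> dtl {..<n} \<Longrightarrow> integrable M (\<lambda>\<omega>. (Hf m h S (\<lambda>l. X l \<omega>) - \<theta>)\<^sup>2)"
proof -
  assume S: "S \<in> dtl {..<n}"
  have e: "(\<lambda>\<omega>. (Hf m h S (\<lambda>l. X l \<omega>) - \<theta>)\<^sup>2) =
      (\<lambda>\<omega>. (Hf m h S (\<lambda>l. X l \<omega>))\<^sup>2 - 2 * \<theta> * Hf m h S (\<lambda>l. X l \<omega>) + \<theta>\<^sup>2)"
    by (auto simp: power2_eq_square algebra_simps)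
  show ?thesis unfolding e using H_sq_int[OF S] H_int[OF S] by auto
qed

lemma g_int: "S \<in> dtl {..<n} \<Longrightarrow> integrable M (\<lambda>\<omega>. Hf m h S (\<lambda>l. X l \<omega>) - \<theta>)"
  using H_int by auto

lemma pair_sq_int:
  assumes S1: "S1 \<in> dtl {..<n}" and S2: "S2 \<in> dtl {..<n}" and dis: "set S1 \<inter> set S2 = {}"
  shows "integrable M (\<lambda>\<omega>. ((Hf m h S1 (\<lambda>l. X l \<omega>) - \<theta>) * (Hf m h S2 (\<lambda>l. X l \<omega>) - \<theta>))\<^sup>2)"
proof -
  define Y1 where "Y1 = (\<lambda>z. (Hf m h S1 z - \<theta>)\<^sup>2)"
  define Y2 where "Y2 = (\<lambda>z. (Hf m h S2 z - \<theta>)\<^sup>2)"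
  have n1: "\<And>l. l < m \<Longrightarrow> S1 ! l \<in> set S1" and n2: "\<And>l. l < m \<Longrightarrow> S2 ! l \<in> set S2"
    using S1 S2 by (auto simp: dtl_def)
  have iv: "indep_var (PN (set S1)) (\<lambda>\<omega>. restrict (\<lambda>i. X i \<omega>) (set S1)) (PN (set S2)) (\<lambda>\<omega>. restrict (\<lambda>i. X i \<omega>) (set S2))"
    using S1 S2 dis by (intro indep_var_restrict[OF indepX]) (auto simp: dtl_def)
  have m1': "Y1 \<in> borel_measurable (PN (set S1))" unfolding Y1_def using Hf_meas[OF n1] by measurable
  have m2': "Y2 \<in> borel_measurable (PN (set S2))" unfolding Y2_def using Hf_meas[OF n2] by measurable
  have iv2: "indep_var borel (\<lambda>\<omega>. Y1 (restrict (\<lambda>i. X i \<omega>) (set S1))) borel (\<lambda>\<omega>. Y2 (restrict (\<lambda>i. X i \<omega>) (set S2)))"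
    using indep_var_compose[OF iv m1' m2'] by (simp add: comp_def)
  have r1: "Y1 (restrict (\<lambda>i. X i \<omega>) (set S1)) = (Hf m h S1 (\<lambda>l. X l \<omega>) - \<theta>)\<^sup>2" for \<omega>
    unfolding Y1_def using Hf_restrict[OF n1] by simp
  have r2: "Y2 (restrict (\<lambda>i. X i \<omega>) (set S2)) = (Hf m h S2 (\<lambda>l. X l \<omega>) - \<theta>)\<^sup>2" for \<omega>
    unfolding Y2_def using Hf_restrict[OF n2] by simp
  have "integrable M (\<lambda>\<omega>. Y1 (restrict (\<lambda>i. X i \<omega>) (set S1)) * Y2 (restrict (\<lambda>i. X i \<omega>) (set S2)))"
    using indep_var_integrable[OF iv2] g_sq_int[OF S1] g_sq_int[OF S2] unfolding r1 r2 by simp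
  then show ?thesis unfolding r1 r2 by (simp add: power_mult_distrib)
qed

lemma triple_int:
  assumes S1: "S1 \<in> dtl {..<n}" and S2: "S2 \<in> dtl {..<n}" and T: "T \<in> dtl {..<n}"
    and dis: "set S1 \<inter> set S2 = {}"
  shows "integrable M (\<lambda>\<omega>. (Hf m h S1 (\<lambda>l. X l \<omega>) - \<theta>) * (Hf m h S2 (\<lambda>l. X l \<omega>) - \<theta>) * (Hf m h T (\<lambda>l. X l \<omega>) - \<theta>))"
proof (rule Bochner_Integration.integrable_bound)
  show "integrable M (\<lambda>\<omega>. ((Hf m h S1 (\<lambda>l. X l \<omega>) - \<theta>) * (Hf m h S2 (\<lambda>l. X l \<omega>) - \<theta>))\<^sup>2 + (Hf m h T (\<lambda>l. X l \<omega>) - \<theta>)\<^sup>2)"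
    using pair_sq_int[OF S1 S2 dis] g_sq_int[OF T] by auto
  show "(\<lambda>\<omega>. (Hf m h S1 (\<lambda>l. X l \<omega>) - \<theta>) * (Hf m h S2 (\<lambda>l. X l \<omega>) - \<theta>) * (Hf m h T (\<lambda>l. X l \<omega>) - \<theta>)) \<in> borel_measurable M"
    using H_meas[OF S1] H_meas[OF S2] H_meas[OF T] by measurable
  show "AE \<omega> in M. norm ((Hf m h S1 (\<lambda>l. X l \<omega>) - \<theta>) * (Hf m h S2 (\<lambda>l. X l \<omega>) - \<theta>) * (Hf m h T (\<lambda>l. X l \<omega>) - \<theta>))
      \<le> norm (((Hf m h S1 (\<lambda>l. X l \<omega>) - \<theta>) * (Hf m h S2 (\<lambda>l. X l \<omega>) - \<theta>))\<^sup>2 + (Hf m h T (\<lambda>l. X l \<omega>) - \<theta>)\<^sup>2)"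
    using abs_mult_le_sq by (intro AE_I2) auto
qed

lemma depon_mono: "K1 \<subseteq> K2 \<Longrightarrow> depon K1 F \<Longrightarrow> depon K2 F"
  unfolding depon_def by blast

lemma depon_mult: "depon K F \<Longrightarrow> depon K G \<Longrightarrow> depon K (\<lambda>x. F x * G x)"
  unfolding depon_def by metis

lemma depon_g: "length S = m \<Longrightarrow> set S \<subseteq> K \<Longrightarrow> depon K (\<lambda>x. Hf m h S x - \<theta>)"
  unfolding depon_def using Hf_cong by (metis subsetD)

lemma depon_Gi: "length S = m \<Longrightarrow> K \<inter> Q = {} \<Longrightarrow> depon (set S \<inter> K) (Gi K Q S)"
  unfolding depon_def Gi_def
proof (intro allI impI)
  fix x y :: "nat \<Rightarrow> 'e"
  assume "length S = m" "K \<inter> Q = {}" "\<forall>l\<in>set S \<inter> K. x l = y l"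
  then have "Hf m h S (merge K Q (x, z)) = Hf m h S (merge K Q (y, z))" for z
    by (intro Hf_cong) (auto simp: merge_def)
  then show "(\<integral>z. Hf m h S (merge K Q (x, z)) - \<theta> \<partial>PP Q) = (\<integral>z. Hf m h S (merge K Q (y, z)) - \<theta> \<partial>PP Q)"
    by simp
qed

lemma hcond_dep: "(\<And>l. l < c \<Longrightarrow> x l = x' l) \<Longrightarrow> hcond m D h c x = hcond m D h c x'"
  unfolding hcond_def happ_def
  by (intro arg_cong[where f="\<lambda>F. integral\<^sup>L _ F"] ext arg_cong[where f=h]) (auto simp: fun_eq_iff)

lemma htil_dep: "(\<And>l. l < c \<Longrightarrow> x l = x' l) \<Longrightarrow> htil m D h \<theta> c x = htil m D h \<theta> c x'"
  unfolding htil_def using hcond_dep by metis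

lemma htil_meas:
  assumes f: "\<And>l. l < c \<Longrightarrow> f l \<in> J" and c: "c \<le> m"
  shows "(\<lambda>x. htil m D h \<theta> c (\<lambda>l. x (f l))) \<in> borel_measurable (PN J)"
proof -
  interpret Q: prob_space "PP {c..<m}" by (rule prob_PP)
  have mp: "(\<lambda>p. \<lambda>l\<in>{..<m}. if l < c then fst p (f l) else snd p l) \<in> measurable (PN J \<Otimes>\<^sub>M PP {c..<m}) (PN {..<m})"
  proof (intro measurable_restrict)
    fix l assume l: "l \<in> {..<m}"
    show "(\<lambda>p. if l < c then fst p (f l) else snd p l) \<in> measurable (PN J \<Otimes>\<^sub>M PP {c..<m}) N"
    proof (cases "l < c")
      case True
      have "(\<lambda>p. fst p (f l)) \<in> measurable (PN J \<Otimes>\<^sub>M PP {c..<m}) N"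
        using f[OF True] by (intro measurable_compose[OF measurable_fst measurable_component_singleton]) auto
      then show ?thesis using True by simp
    next
      case False
      have "(\<lambda>p. snd p l) \<in> measurable (PN J \<Otimes>\<^sub>M PP {c..<m}) D"
        using False l by (intro measurable_compose[OF measurable_snd measurable_component_singleton]) auto
      then show ?thesis using False by (simp add: measurable_cong_sets[OF refl sets_D])
    qed
  qed
  have "(\<lambda>p. h (\<lambda>l\<in>{..<m}. if l < c then fst p (f l) else snd p l)) \<in> borel_measurable (PN J \<Otimes>\<^sub>M PP {c..<m})"
    using measurable_comp[OF mp hmeas] by (simp add: comp_def)
  then have "(\<lambda>x. hcond m D h c (\<lambda>l. x (f l))) \<in> borel_measurable (PN J)"
    unfolding hcond_def happ_def by (intro Q.borel_measurable_lebesgue_integral) (simp add: case_prod_beta)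
  then show ?thesis unfolding htil_def by measurable
qed

definition Zf :: "nat \<Rightarrow> nat \<Rightarrow> (nat \<Rightarrow> 'e) \<Rightarrow> real" where
  "Zf j c y = htil m D h \<theta> c (\<lambda>l. y l) * (htil m D h \<theta> j (\<lambda>l. y l) * htil m D h \<theta> (c - j) (\<lambda>l. y (j + l)))"

lemma Zf_dep: "j \<le> c \<Longrightarrow> (\<And>l. l < c \<Longrightarrow> y l = y' l) \<Longrightarrow> Zf j c y = Zf j c y'"
  unfolding Zf_def
  by (intro arg_cong2[where f="(*)"] htil_dep) auto

lemma Zf_meas:
  assumes "j \<le> c" "c \<le> m" and f: "\<And>l. l < c \<Longrightarrow> f l \<in> J"
  shows "(\<lambda>x. Zf j c (\<lambda>l. x (f l))) \<in> borel_measurable (PN J)"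
proof -
  have 1: "(\<lambda>x. htil m D h \<theta> c (\<lambda>l. x (f l))) \<in> borel_measurable (PN J)"
    using assms by (intro htil_meas) auto
  have 2: "(\<lambda>x. htil m D h \<theta> j (\<lambda>l. x (f l))) \<in> borel_measurable (PN J)"
    using assms by (intro htil_meas) auto
  have 3: "(\<lambda>x. htil m D h \<theta> (c - j) (\<lambda>l. x (f (j + l)))) \<in> borel_measurable (PN J)"
    using assms by (intro htil_meas) auto
  show ?thesis unfolding Zf_def using 1 2 3 by measurable
qed

lemma canon:
  assumes cs: "distinct cs" "set cs \<subseteq> K" "length cs = c" and jc: "j \<le> c" "c \<le> m"
    and K: "K \<subseteq> {..<n}"
  shows "(\<integral>x. Zf j c (\<lambda>l. x (cs ! l)) \<partial>PP K) = (\<integral>\<omega>. Zf j c (\<lambda>l. X l \<omega>) \<partial>M)"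
    and "integrable (PP K) (\<lambda>x. Zf j c (\<lambda>l. x (cs ! l))) \<longleftrightarrow> integrable M (\<lambda>\<omega>. Zf j c (\<lambda>l. X l \<omega>))"
proof -
  have csK: "\<And>l. l < c \<Longrightarrow> cs ! l \<in> K" using cs by (auto dest!: nth_mem)
  have cn: "c \<le> n" using jc mn by auto
  have m1: "(\<lambda>x. Zf j c (\<lambda>l. x (cs ! l))) \<in> borel_measurable (PN K)"
    using jc csK by (intro Zf_meas) auto
  have m2: "(\<lambda>x. Zf j c (\<lambda>l. x (id l))) \<in> borel_measurable (PN {..<c})"
    using jc by (intro Zf_meas) auto
  have inj1: "inj_on id K" "id ` K \<subseteq> {..<n}" using K by auto
  have inj2: "inj_on ((!) cs) {..<c}" "(!) cs ` {..<c} \<subseteq> {..<n}"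
    using cs K csK by (auto simp: inj_on_def nth_eq_iff_index_eq)
  have inj3: "inj_on id {..<c}" "id ` {..<c} \<subseteq> {..<n}" using cn by auto
  have e1: "(\<lambda>\<omega>. Zf j c (\<lambda>l. (\<lambda>l\<in>K. X (id l) \<omega>) (cs ! l))) = (\<lambda>\<omega>. Zf j c (\<lambda>l\<in>{..<c}. X (cs ! l) \<omega>))"
    using jc csK by (intro ext Zf_dep) auto
  have e2: "(\<lambda>\<omega>. Zf j c (\<lambda>l. (\<lambda>l\<in>{..<c}. X (id l) \<omega>) (id l))) = (\<lambda>\<omega>. Zf j c (\<lambda>l. X l \<omega>))"
    using jc by (intro ext Zf_dep) auto
  have e3: "(\<lambda>\<omega>. Zf j c (\<lambda>l. (\<lambda>l\<in>{..<c}. X (cs ! l) \<omega>) (id l))) = (\<lambda>\<omega>. Zf j c (\<lambda>l\<in>{..<c}. X (cs ! l) \<omega>))"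
    by (simp only: id_apply)
  note t1 = transfer_int[OF inj1 m1, unfolded e1]
  note t2 = transfer_int[OF inj2 m2, unfolded e3]
  note t3 = transfer_int[OF inj3 m2, unfolded e2]
  show "(\<integral>x. Zf j c (\<lambda>l. x (cs ! l)) \<partial>PP K) = (\<integral>\<omega>. Zf j c (\<lambda>l. X l \<omega>) \<partial>M)"
    using t1(1) t2(1) t3(1) by simp
  show "integrable (PP K) (\<lambda>x. Zf j c (\<lambda>l. x (cs ! l))) \<longleftrightarrow> integrable M (\<lambda>\<omega>. Zf j c (\<lambda>l. X l \<omega>))"
    using t1(2) t2(2) t3(2) by simp
qed

lemma core:
  assumes js: "js \<in> dtuples n (2*m)" and ks: "ks \<in> dtuples n m"
  defines "as \<equiv> filter (\<lambda>l. l \<in> set (take m js)) ks"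
    and "bs \<equiv> filter (\<lambda>l. l \<in> set (drop m js)) ks"
  shows "integrable M (\<lambda>\<omega>. Zf (length as) (length as + length bs) (\<lambda>l. X l \<omega>))"
    and "(\<integral>\<omega>. (Hf m h (take m js) (\<lambda>l. X l \<omega>) - \<theta>) * (Hf m h (drop m js) (\<lambda>l. X l \<omega>) - \<theta>)
              * (Hf m h ks (\<lambda>l. X l \<omega>) - \<theta>) \<partial>M)
         = (\<integral>\<omega>. Zf (length as) (length as + length bs) (\<lambda>l. X l \<omega>) \<partial>M)"
proof -
  define S1 where "S1 = take m js"
  define S2 where "S2 = drop m js"
  define g where "g S x = Hf m h S x - \<theta>" for S x
  define s1 where "s1 = set S1"
  define s2 where "s2 = set S2"
  define t where "t = set ks"
  define A where "A = t \<inter> s1"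
  define B where "B = t \<inter> s2"
  have js': "distinct js" "length js = 2 * m" "set js \<subseteq> {..<n}" using js by (auto simp: dtuples_def)
  have ks': "distinct ks" "length ks = m" "set ks \<subseteq> {..<n}" using ks by (auto simp: dtuples_def)
  have S1d: "S1 \<in> dtl {..<n}" using js' set_take_subset[of m js] by (auto simp: dtl_def S1_def)
  have S2d: "S2 \<in> dtl {..<n}" using js' set_drop_subset[of m js] by (auto simp: dtl_def S2_def)
  have ksd: "ks \<in> dtl {..<n}" using ks' by (auto simp: dtl_def)
  have lS: "length S1 = m" "length S2 = m" "length ks = m" using S1d S2d ksd by (auto simp: dtl_def)
  have dis: "s1 \<inter> s2 = {}" unfolding s1_def s2_def S1_def S2_def
    using set_take_disj_set_drop_if_distinct[OF js'(1), of m m] by simp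
  have sub: "s1 \<subseteq> {..<n}" "s2 \<subseteq> {..<n}" "t \<subseteq> {..<n}"
    using S1d S2d ksd by (auto simp: dtl_def s1_def s2_def t_def)
  have fin: "finite s1" "finite s2" "finite t" by (auto simp: s1_def s2_def t_def)
  have asd: "distinct as" "set as = A" unfolding as_def A_def t_def s1_def S1_def using ks' by auto
  have bsd: "distinct bs" "set bs = B" unfolding bs_def B_def t_def s2_def S2_def using ks' by auto
  define cs where "cs = as @ bs"
  define j where "j = length as"
  define c where "c = length as + length bs"
  have csd: "distinct cs" "set cs = A \<union> B" "length cs = c"
    using asd bsd dis by (auto simp: cs_def c_def A_def B_def)
  have c_le: "c \<le> m"
  proof -
    have "card (set cs) \<le> card t" using csd fin by (intro card_mono) (auto simp: A_def B_def)
    then show ?thesis using csd ks' distinct_card by (metis t_def)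
  qed
  have jc: "j \<le> c" by (simp add: j_def c_def)
  have lbs: "length bs = c - j" by (simp add: j_def c_def)
  define I0 where "I0 = s1 \<union> s2 \<union> t"
  define \<Phi>0 where "\<Phi>0 x = g S1 x * g S2 x * g ks x" for x
  have nI0: "\<And>S l. S \<in> {S1, S2, ks} \<Longrightarrow> l < m \<Longrightarrow> S ! l \<in> I0"
    using S1d S2d ksd by (auto simp: I0_def s1_def s2_def t_def dtl_def)
  have \<Phi>0m: "\<Phi>0 \<in> borel_measurable (PN I0)"
    unfolding \<Phi>0_def g_def using Hf_meas[of S1 I0] Hf_meas[of S2 I0] Hf_meas[of ks I0] nI0 by measurable
  have \<Phi>0r: "(\<lambda>\<omega>. \<Phi>0 (\<lambda>l\<in>I0. X (id l) \<omega>)) = (\<lambda>\<omega>. \<Phi>0 (\<lambda>l. X l \<omega>))"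
    unfolding \<Phi>0_def g_def id_apply using Hf_restrict[of S1 I0] Hf_restrict[of S2 I0] Hf_restrict[of ks I0] nI0 by auto
  have injI0: "inj_on id I0" "id ` I0 \<subseteq> {..<n}" using sub by (auto simp: I0_def)
  note tr0 = transfer_int[OF injI0 \<Phi>0m, unfolded \<Phi>0r]
  have intM: "integrable M (\<lambda>\<omega>. \<Phi>0 (\<lambda>l. X l \<omega>))"
    unfolding \<Phi>0_def g_def using triple_int[OF S1d S2d ksd] dis by (simp add: s1_def s2_def)
  have int0: "integrable (PP I0) \<Phi>0" using tr0(2) intM by simp
  have eq0: "(\<integral>\<omega>. \<Phi>0 (\<lambda>l. X l \<omega>) \<partial>M) = integral\<^sup>L (PP I0) \<Phi>0" using tr0(1) .
  define K1 where "K1 = s1 \<union> s2"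
  define Q1 where "Q1 = t - (s1 \<union> s2)"
  have KQ1: "finite K1" "finite Q1" "K1 \<inter> Q1 = {}" "K1 \<union> Q1 = I0"
    using fin by (auto simp: K1_def Q1_def I0_def)
  have dep1: "depon K1 (\<lambda>x. g S1 x * g S2 x)"
    unfolding g_def using lS by (intro depon_mult depon_g) (auto simp: K1_def s1_def s2_def)
  have int1: "integrable (PP (K1 \<union> Q1)) (\<lambda>z. g ks z * (g S1 z * g S2 z))"
    using int0 unfolding KQ1(4) \<Phi>0_def by (simp add: ac_simps)
  note fa = fub[OF KQ1(1,2,3) dep1 int1]
  have Gi1: "(\<integral>y. g ks (merge K1 Q1 (x, y)) \<partial>PP Q1) = Gi K1 Q1 ks x" for x
    by (simp add: Gi_def g_def)
  have a_int: "integrable (PP K1) (\<lambda>x. Gi K1 Q1 ks x * (g S1 x * g S2 x))"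
    using fa(1) unfolding Gi1 .
  have a_eq: "integral\<^sup>L (PP I0) \<Phi>0 = (\<integral>x. Gi K1 Q1 ks x * (g S1 x * g S2 x) \<partial>PP K1)"
    using fa(2) unfolding Gi1 KQ1(4) by (simp add: \<Phi>0_def[abs_def] ac_simps)
  define K2 where "K2 = A \<union> s2"
  define Q2 where "Q2 = s1 - t"
  have KQ2: "finite K2" "finite Q2" "K2 \<inter> Q2 = {}" "K2 \<union> Q2 = K1"
    using fin dis by (auto simp: K2_def Q2_def K1_def A_def)
  have dep2: "depon K2 (\<lambda>x. Gi K1 Q1 ks x * g S2 x)"
  proof (intro depon_mult)
    show "depon K2 (Gi K1 Q1 ks)"
      by (rule depon_mono[OF _ depon_Gi[OF lS(3) KQ1(3)]]) (auto simp: K2_def K1_def A_def B_def t_def)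
    show "depon K2 (g S2)"
      unfolding g_def using lS by (intro depon_g) (auto simp: K2_def s2_def)
  qed
  have int2: "integrable (PP (K2 \<union> Q2)) (\<lambda>z. g S1 z * (Gi K1 Q1 ks z * g S2 z))"
    using a_int unfolding KQ2(4) by (simp add: ac_simps)
  note fb = fub[OF KQ2(1,2,3) dep2 int2]
  have Gi2: "(\<integral>y. g S1 (merge K2 Q2 (x, y)) \<partial>PP Q2) = Gi K2 Q2 S1 x" for x
    by (simp add: Gi_def g_def)
  have b_int: "integrable (PP K2) (\<lambda>x. Gi K2 Q2 S1 x * (Gi K1 Q1 ks x * g S2 x))"
    using fb(1) unfolding Gi2 .
  have b_eq: "(\<integral>x. Gi K1 Q1 ks x * (g S1 x * g S2 x) \<partial>PP K1) = (\<integral>x. Gi K2 Q2 S1 x * (Gi K1 Q1 ks x * g S2 x) \<partial>PP K2)"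
    using fb(2) unfolding Gi2 KQ2(4) by (simp add: ac_simps)
  define K3 where "K3 = A \<union> B"
  define Q3 where "Q3 = s2 - t"
  have KQ3: "finite K3" "finite Q3" "K3 \<inter> Q3 = {}" "K3 \<union> Q3 = K2"
    using fin dis by (auto simp: K3_def Q3_def K2_def A_def B_def)
  have dep3: "depon K3 (\<lambda>x. Gi K2 Q2 S1 x * Gi K1 Q1 ks x)"
  proof (intro depon_mult)
    show "depon K3 (Gi K2 Q2 S1)"
      by (rule depon_mono[OF _ depon_Gi[OF lS(1) KQ2(3)]]) (use dis in \<open>auto simp: K3_def K2_def A_def s1_def[symmetric]\<close>)
    show "depon K3 (Gi K1 Q1 ks)"
      by (rule depon_mono[OF _ depon_Gi[OF lS(3) KQ1(3)]]) (auto simp: K3_def K1_def A_def B_def t_def)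
  qed
  have int3: "integrable (PP (K3 \<union> Q3)) (\<lambda>z. g S2 z * (Gi K2 Q2 S1 z * Gi K1 Q1 ks z))"
    using b_int unfolding KQ3(4) by (simp add: ac_simps)
  note fc = fub[OF KQ3(1,2,3) dep3 int3]
  have Gi3: "(\<integral>y. g S2 (merge K3 Q3 (x, y)) \<partial>PP Q3) = Gi K3 Q3 S2 x" for x
    by (simp add: Gi_def g_def)
  have c_int: "integrable (PP K3) (\<lambda>x. Gi K3 Q3 S2 x * (Gi K2 Q2 S1 x * Gi K1 Q1 ks x))"
    using fc(1) unfolding Gi3 .
  have c_eq: "(\<integral>x. Gi K2 Q2 S1 x * (Gi K1 Q1 ks x * g S2 x) \<partial>PP K2) = (\<integral>x. Gi K3 Q3 S2 x * (Gi K2 Q2 S1 x * Gi K1 Q1 ks x) \<partial>PP K3)"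
    using fc(2) unfolding Gi3 KQ3(4) by (simp add: ac_simps)
  have K3sub: "K3 \<subseteq> {..<n}" using sub by (auto simp: K3_def A_def B_def)
  have GiK1: "Gi K1 Q1 ks x = Gi K3 Q1 ks x" for x
    using dis lS by (intro Gi_K) (auto simp: K1_def K3_def Q1_def A_def B_def t_def)
  have GiK2: "Gi K2 Q2 S1 x = Gi K3 Q2 S1 x" for x
    using dis lS by (intro Gi_K) (auto simp: K2_def K3_def Q2_def A_def B_def s1_def)
  have ae1: "AE x in PP K3. Gi K3 Q3 S2 x = htil m D h \<theta> (length bs) (\<lambda>l. x (bs ! l))"
    using dis bsd by (intro G_ae[OF S2d KQ3(1) K3sub]) (auto simp: Q3_def K3_def s2_def A_def B_def t_def)
  have ae2: "AE x in PP K3. Gi K3 Q2 S1 x = htil m D h \<theta> (length as) (\<lambda>l. x (as ! l))"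
    using dis asd by (intro G_ae[OF S1d KQ3(1) K3sub]) (auto simp: Q2_def K3_def s1_def A_def B_def t_def)
  have ae3: "AE x in PP K3. Gi K3 Q1 ks x = htil m D h \<theta> (length cs) (\<lambda>l. x (cs ! l))"
    using dis csd by (intro G_ae[OF ksd KQ3(1) K3sub]) (auto simp: Q1_def K3_def t_def A_def B_def)
  define \<Psi> where "\<Psi> x = Zf j c (\<lambda>l. x (cs ! l))" for x
  have \<Psi>eq: "htil m D h \<theta> (length bs) (\<lambda>l. x (bs ! l)) * (htil m D h \<theta> (length as) (\<lambda>l. x (as ! l))
      * htil m D h \<theta> (length cs) (\<lambda>l. x (cs ! l))) = \<Psi> x" for x
  proof -
    have 1: "htil m D h \<theta> (length as) (\<lambda>l. x (as ! l)) = htil m D h \<theta> j (\<lambda>l. x (cs ! l))"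
      unfolding j_def by (intro htil_dep) (simp add: cs_def nth_append)
    have 2: "htil m D h \<theta> (length bs) (\<lambda>l. x (bs ! l)) = htil m D h \<theta> (c - j) (\<lambda>l. x (cs ! (j + l)))"
      unfolding lbs by (intro htil_dep) (simp add: cs_def nth_append j_def)
    show ?thesis unfolding \<Psi>_def Zf_def 1 2 csd(3) by (simp add: ac_simps)
  qed
  have ae: "AE x in PP K3. Gi K3 Q3 S2 x * (Gi K2 Q2 S1 x * Gi K1 Q1 ks x) = \<Psi> x"
    using ae1 ae2 ae3 by eventually_elim (simp add: GiK1 GiK2 \<Psi>eq[symmetric])
  have \<Psi>m: "\<Psi> \<in> borel_measurable (PP K3)"
    unfolding \<Psi>_def meas_PP using jc c_le csd by (intro Zf_meas) (auto simp: K3_def dest!: nth_mem)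
  have d_int: "integrable (PP K3) \<Psi>"
    using integrable_cong_AE_imp[OF c_int \<Psi>m ae] .
  have d_eq: "(\<integral>x. Gi K3 Q3 S2 x * (Gi K2 Q2 S1 x * Gi K1 Q1 ks x) \<partial>PP K3) = integral\<^sup>L (PP K3) \<Psi>"
    using c_int \<Psi>m ae by (intro integral_cong_AE) auto
  note cn = canon[OF csd(1) _ csd(3) jc c_le K3sub]
  show "integrable M (\<lambda>\<omega>. Zf (length as) (length as + length bs) (\<lambda>l. X l \<omega>))"
    using cn(2) d_int csd(2) unfolding \<Psi>_def j_def c_def K3_def by simp
  have "(\<integral>\<omega>. \<Phi>0 (\<lambda>l. X l \<omega>) \<partial>M) = (\<integral>\<omega>. Zf j c (\<lambda>l. X l \<omega>) \<partial>M)"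
    using eq0 a_eq b_eq c_eq d_eq cn(1) csd(2) unfolding \<Psi>_def K3_def by simp
  then show "(\<integral>\<omega>. (Hf m h (take m js) (\<lambda>l. X l \<omega>) - \<theta>) * (Hf m h (drop m js) (\<lambda>l. X l \<omega>) - \<theta>)
              * (Hf m h ks (\<lambda>l. X l \<omega>) - \<theta>) \<partial>M)
         = (\<integral>\<omega>. Zf (length as) (length as + length bs) (\<lambda>l. X l \<omega>) \<partial>M)"
    unfolding \<Phi>0_def g_def S1_def S2_def j_def c_def .
qed

lemma U_props:
  assumes c: "1 \<le> c" "c \<le> m"
  shows "integrable M (\<lambda>\<omega>. htil m D h \<theta> c (\<lambda>l. X l \<omega>))"
    and "(\<integral>\<omega>. htil m D h \<theta> c (\<lambda>l. X l \<omega>) \<partial>M) = 0"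
proof -
  define S0 where "S0 = [0..<m]"
  define K where "K = {..<c}"
  define Q where "Q = {c..<m}"
  have S0d: "S0 \<in> dtl {..<n}" using mn by (auto simp: S0_def dtl_def)
  have KQ: "finite K" "finite Q" "K \<inter> Q = {}" "K \<union> Q = {..<m}" "Q = set S0 - K"
    using c by (auto simp: K_def Q_def S0_def)
  have dep: "depon K (\<lambda>_. 1::real)" by (simp add: depon_def)
  have nS0: "\<And>l. l < m \<Longrightarrow> S0 ! l \<in> {..<m}" by (simp add: S0_def)
  have gm: "(\<lambda>z. Hf m h S0 z - \<theta>) \<in> borel_measurable (PN {..<m})"
    using Hf_meas[OF nS0] by measurable
  have inj0: "inj_on id {..<m}" "id ` {..<m} \<subseteq> {..<n}" using mn by auto
  have r0: "(\<lambda>\<omega>. Hf m h S0 (\<lambda>l\<in>{..<m}. X (id l) \<omega>) - \<theta>) = (\<lambda>\<omega>. Hf m h S0 (\<lambda>l. X l \<omega>) - \<theta>)"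
    using Hf_restrict[OF nS0] by simp
  note tr = transfer_int[OF inj0 gm, unfolded r0]
  have gint: "integrable (PP {..<m}) (\<lambda>z. Hf m h S0 z - \<theta>)"
    using tr(2) g_int[OF S0d] by simp
  have gE: "(\<integral>z. Hf m h S0 z - \<theta> \<partial>PP {..<m}) = 0"
  proof -
    have p1: "prob (space M) = 1" by (rule prob_space)
    have "(\<integral>\<omega>. Hf m h S0 (\<lambda>l. X l \<omega>) - \<theta> \<partial>M) = (\<integral>\<omega>. Hf m h S0 (\<lambda>l. X l \<omega>) \<partial>M) - (\<integral>\<omega>. \<theta> \<partial>M)"
      by (rule Bochner_Integration.integral_diff[OF H_int[OF S0d] integrable_const])
    also have "(\<integral>\<omega>. \<theta> \<partial>M) = \<theta>"
      by (simp only: lebesgue_integral_const p1 scaleR_one)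
    finally have "(\<integral>\<omega>. Hf m h S0 (\<lambda>l. X l \<omega>) - \<theta> \<partial>M) = 0"
      by (simp only: H_exp[OF S0d] diff_self)
    then show ?thesis using tr(1) by (simp only:)
  qed
  have int1: "integrable (PP (K \<union> Q)) (\<lambda>z. (Hf m h S0 z - \<theta>) * 1)"
    using gint KQ(4) by simp
  note f = fub[OF KQ(1,2,3) dep int1]
  have GiE: "(\<integral>y. (Hf m h S0 (merge K Q (x, y)) - \<theta>) \<partial>PP Q) = Gi K Q S0 x" for x
    by (simp add: Gi_def)
  have Gint: "integrable (PP K) (Gi K Q S0)" using f(1) unfolding GiE by simp
  have GE: "(\<integral>x. Gi K Q S0 x \<partial>PP K) = 0" using f(2) gE KQ(4) unfolding GiE by simp
  have Kn: "K \<subseteq> {..<n}" using c mn by (auto simp: K_def)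
  have ae: "AE x in PP K. Gi K Q S0 x = htil m D h \<theta> (length [0..<c]) (\<lambda>l. x ([0..<c] ! l))"
    using c by (intro G_ae[OF S0d KQ(1) Kn KQ(5)]) (auto simp: S0_def K_def)
  have e: "htil m D h \<theta> (length [0..<c]) (\<lambda>l. x ([0..<c] ! l)) = htil m D h \<theta> c (\<lambda>l. x (id l))" for x
    by (simp, intro htil_dep) simp
  have hm: "(\<lambda>x. htil m D h \<theta> c (\<lambda>l. x (id l))) \<in> borel_measurable (PN K)"
    using c by (intro htil_meas) (auto simp: K_def)
  have ae': "AE x in PP K. Gi K Q S0 x = htil m D h \<theta> c (\<lambda>l. x (id l))"
    using ae unfolding e .
  have hmP: "(\<lambda>x. htil m D h \<theta> c (\<lambda>l. x (id l))) \<in> borel_measurable (PP K)"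
    using hm by (simp only: meas_PP)
  have hint: "integrable (PP K) (\<lambda>x. htil m D h \<theta> c (\<lambda>l. x (id l)))"
    by (rule integrable_cong_AE_imp[OF Gint hmP ae'])
  have hE: "(\<integral>x. htil m D h \<theta> c (\<lambda>l. x (id l)) \<partial>PP K) = 0"
    using integral_cong_AE[OF borel_measurable_integrable[OF Gint] hmP ae'] GE by simp
  have injK: "inj_on id K" "id ` K \<subseteq> {..<n}" using Kn by auto
  have rK: "(\<lambda>\<omega>. htil m D h \<theta> c (\<lambda>l. (\<lambda>l\<in>K. X (id l) \<omega>) (id l))) = (\<lambda>\<omega>. htil m D h \<theta> c (\<lambda>l. X l \<omega>))"
    by (intro ext htil_dep) (simp add: K_def)
  note trK = transfer_int[OF injK hm, unfolded rK]
  show "integrable M (\<lambda>\<omega>. htil m D h \<theta> c (\<lambda>l. X l \<omega>))" using trK(2) hint by simp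
  show "(\<integral>\<omega>. htil m D h \<theta> c (\<lambda>l. X l \<omega>) \<partial>M) = 0" using trK(1) hE by simp
qed

lemma zeta_eq:
  assumes c: "1 \<le> c" "c \<le> m" and int: "integrable M (\<lambda>\<omega>. Zf j c (\<lambda>l. X l \<omega>))"
  shows "zeta3 M m D h \<theta> X c j = (\<integral>\<omega>. Zf j c (\<lambda>l. X l \<omega>) \<partial>M)"
proof -
  define U where "U \<omega> = htil m D h \<theta> c (\<lambda>l. X l \<omega>)" for \<omega>
  define V where "V \<omega> = htil m D h \<theta> j (\<lambda>l. X l \<omega>) * htil m D h \<theta> (c - j) (\<lambda>l. X (j + l) \<omega>)" for \<omega>
  define EV where "EV = (\<integral>\<omega>. V \<omega> \<partial>M)"
  have Uint: "integrable M U" and EU: "(\<integral>\<omega>. U \<omega> \<partial>M) = 0"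
    using U_props[OF c] by (simp_all add: U_def[abs_def])
  have UV: "U \<omega> * V \<omega> = Zf j c (\<lambda>l. X l \<omega>)" for \<omega>
    by (simp add: U_def V_def Zf_def)
  have "zeta3 M m D h \<theta> X c j = (\<integral>\<omega>. U \<omega> * (V \<omega> - EV) \<partial>M)"
    unfolding zeta3_def cov_def U_def[symmetric] V_def[symmetric] EV_def[symmetric] EU by simp
  also have "\<dots> = (\<integral>\<omega>. U \<omega> * V \<omega> - EV * U \<omega> \<partial>M)"
    by (simp add: algebra_simps)
  also have "\<dots> = (\<integral>\<omega>. U \<omega> * V \<omega> \<partial>M) - (\<integral>\<omega>. EV * U \<omega> \<partial>M)"
    using int Uint unfolding UV[symmetric] by (intro Bochner_Integration.integral_diff) auto
  also have "\<dots> = (\<integral>\<omega>. Zf j c (\<lambda>l. X l \<omega>) \<partial>M)"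
    using EU by (simp add: UV)
  finally show ?thesis .
qed

lemma zeta3_0: "zeta3 M m D h \<theta> X c 0 = 0"
  by (simp add: zeta3_def cov_def htil_def)

definition sqi :: "('a \<Rightarrow> real) \<Rightarrow> bool" where
  "sqi f \<longleftrightarrow> f \<in> borel_measurable M \<and> integrable M (\<lambda>\<omega>. (f \<omega>)\<^sup>2)"

lemma sqi_int: "sqi f \<Longrightarrow> integrable M f"
  unfolding sqi_def using square_integrable_imp_integrable by blast

lemma sqi_prod_int: "sqi f \<Longrightarrow> sqi g \<Longrightarrow> integrable M (\<lambda>\<omega>. f \<omega> * g \<omega>)"
  unfolding sqi_def
proof (elim conjE, rule Bochner_Integration.integrable_bound)
  assume "f \<in> borel_measurable M" "g \<in> borel_measurable M" "integrable M (\<lambda>\<omega>. (f \<omega>)\<^sup>2)" "integrable M (\<lambda>\<omega>. (g \<omega>)\<^sup>2)"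
  then show "integrable M (\<lambda>\<omega>. (f \<omega>)\<^sup>2 + (g \<omega>)\<^sup>2)" "(\<lambda>\<omega>. f \<omega> * g \<omega>) \<in> borel_measurable M"
    by auto
  show "AE \<omega> in M. norm (f \<omega> * g \<omega>) \<le> norm ((f \<omega>)\<^sup>2 + (g \<omega>)\<^sup>2)"
    using abs_mult_le_sq by (intro AE_I2) auto
qed

lemma sqi_add: "sqi f \<Longrightarrow> sqi g \<Longrightarrow> sqi (\<lambda>\<omega>. f \<omega> + g \<omega>)"
proof -
  assume f: "sqi f" and g: "sqi g"
  have e: "(\<lambda>\<omega>. (f \<omega> + g \<omega>)\<^sup>2) = (\<lambda>\<omega>. (f \<omega>)\<^sup>2 + (g \<omega>)\<^sup>2 + 2 * (f \<omega> * g \<omega>))"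
    by (auto simp: power2_eq_square algebra_simps)
  have "integrable M (\<lambda>\<omega>. (f \<omega> + g \<omega>)\<^sup>2)"
    unfolding e using f g sqi_prod_int[OF f g] by (auto simp: sqi_def)
  then show ?thesis using f g by (auto simp: sqi_def)
qed

lemma sqi_cmult: "sqi f \<Longrightarrow> sqi (\<lambda>\<omega>. c * f \<omega>)"
  unfolding sqi_def by (auto simp: power_mult_distrib)

lemma sqi_const: "sqi (\<lambda>\<omega>. c)"
  unfolding sqi_def by auto

lemma sqi_sum: "finite A \<Longrightarrow> (\<And>i. i \<in> A \<Longrightarrow> sqi (f i)) \<Longrightarrow> sqi (\<lambda>\<omega>. \<Sum>i\<in>A. f i \<omega>)"
proof (induction A rule: finite_induct)
  case empty then show ?case using sqi_const[of 0] by simp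
next
  case (insert x F)
  then show ?case using sqi_add[of "f x" "\<lambda>\<omega>. \<Sum>i\<in>F. f i \<omega>"] by simp
qed

lemma var_lin:
  assumes U: "sqi U" and V: "sqi V" and EV: "(\<integral>\<omega>. V \<omega> \<partial>M) = 0"
  shows "variance (\<lambda>\<omega>. U \<omega> + a * V \<omega>) = variance U + a\<^sup>2 * (\<integral>\<omega>. (V \<omega>)\<^sup>2 \<partial>M) + 2 * a * (\<integral>\<omega>. U \<omega> * V \<omega> \<partial>M)"
proof -
  define \<mu> where "\<mu> = (\<integral>\<omega>. U \<omega> \<partial>M)"
  have Ui: "integrable M U" and Vi: "integrable M V" using U V sqi_int by auto
  have E: "(\<integral>\<omega>. U \<omega> + a * V \<omega> \<partial>M) = \<mu>"
    using Ui Vi EV by (simp add: \<mu>_def)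
  have U': "sqi (\<lambda>\<omega>. U \<omega> + (- \<mu>))" using sqi_add[OF U sqi_const] .
  have i1: "integrable M (\<lambda>\<omega>. (U \<omega> - \<mu>)\<^sup>2)" using U' by (simp add: sqi_def)
  have i2: "integrable M (\<lambda>\<omega>. (V \<omega>)\<^sup>2)" using V by (simp add: sqi_def)
  have i3: "integrable M (\<lambda>\<omega>. U \<omega> * V \<omega>)" using sqi_prod_int[OF U V] .
  have e: "(\<lambda>\<omega>. (U \<omega> + a * V \<omega> - \<mu>)\<^sup>2) = (\<lambda>\<omega>. (U \<omega> - \<mu>)\<^sup>2 + a\<^sup>2 * (V \<omega>)\<^sup>2 + 2 * a * (U \<omega> * V \<omega>) - 2 * a * \<mu> * V \<omega>)"
    by (auto simp: power2_eq_square algebra_simps)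
  have "variance (\<lambda>\<omega>. U \<omega> + a * V \<omega>) = (\<integral>\<omega>. (U \<omega> + a * V \<omega> - \<mu>)\<^sup>2 \<partial>M)"
    using E by simp
  also have "\<dots> = (\<integral>\<omega>. (U \<omega> - \<mu>)\<^sup>2 \<partial>M) + a\<^sup>2 * (\<integral>\<omega>. (V \<omega>)\<^sup>2 \<partial>M) + 2 * a * (\<integral>\<omega>. U \<omega> * V \<omega> \<partial>M) - 2 * a * \<mu> * (\<integral>\<omega>. V \<omega> \<partial>M)"
    unfolding e using i1 i2 i3 Vi by simp
  also have "\<dots> = variance U + a\<^sup>2 * (\<integral>\<omega>. (V \<omega>)\<^sup>2 \<partial>M) + 2 * a * (\<integral>\<omega>. U \<omega> * V \<omega> \<partial>M)"
    using EV by (simp add: \<mu>_def)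
  finally show ?thesis .
qed

lemma js_props:
  assumes "js \<in> dtuples n (2*m)"
  shows "take m js \<in> dtl {..<n}" "drop m js \<in> dtl {..<n}" "set (take m js) \<inter> set (drop m js) = {}"
proof -
  have js: "distinct js" "length js = 2*m" "set js \<subseteq> {..<n}" using assms by (auto simp: dtuples_def)
  show "take m js \<in> dtl {..<n}" using js set_take_subset[of m js] by (auto simp: dtl_def)
  show "drop m js \<in> dtl {..<n}" using js set_drop_subset[of m js] by (auto simp: dtl_def)
  show "set (take m js) \<inter> set (drop m js) = {}" using set_take_disj_set_drop_if_distinct[OF js(1), of m m] by simp
qed

lemma ks_dtl: "ks \<in> dtuples n m \<Longrightarrow> ks \<in> dtl {..<n}"
  by (auto simp: dtuples_def dtl_def)

lemma Bh_eq: "theta_hat m h n X \<omega> = (\<Sum>ks\<in>dtuples n m. Hf m h ks (\<lambda>l. X l \<omega>)) / real (ffall n m)"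
  unfolding theta_hat_def happ_Hf ..

lemma Ah_eq: "theta2_hat m h n X \<omega> = (\<Sum>js\<in>dtuples n (2*m). Hf m h (take m js) (\<lambda>l. X l \<omega>) * Hf m h (drop m js) (\<lambda>l. X l \<omega>)) / real (ffall n (2*m))"
  unfolding theta2_hat_def
proof (intro arg_cong2[where f="(/)"] sum.cong refl)
  fix js assume "js \<in> dtuples n (2*m)"
  then have len: "length js = 2*m" by (auto simp: dtuples_def)
  have 1: "happ m h (\<lambda>l. X (js ! l) \<omega>) = Hf m h (take m js) (\<lambda>l. X l \<omega>)"
    unfolding happ_def Hf_def by (intro arg_cong[where f=h]) (auto simp: fun_eq_iff)
  have 2: "happ m h (\<lambda>l. X (js ! (m + l)) \<omega>) = Hf m h (drop m js) (\<lambda>l. X l \<omega>)"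
    unfolding happ_def Hf_def using len by (intro arg_cong[where f=h]) (auto simp: fun_eq_iff)
  show "happ m h (\<lambda>l. X (js ! l) \<omega>) * happ m h (\<lambda>l. X (js ! (m + l)) \<omega>) =
        Hf m h (take m js) (\<lambda>l. X l \<omega>) * Hf m h (drop m js) (\<lambda>l. X l \<omega>)"
    unfolding 1 2 ..
qed

lemma F_facts:
  shows "0 < real (ffall n m)" "real (ffall n (2*m)) = real (ffall n m) * real (ffall (n - m) m)"
    "0 < real (ffall (n - m) m)"
    "card (dtuples n m) = ffall n m" "card (dtuples n (2*m)) = ffall n (2*m)"
proof -
  show "0 < real (ffall n m)" using ffall_pos[of m n] mn by simp
  show "real (ffall n (2*m)) = real (ffall n m) * real (ffall (n - m) m)"
    using ffall_add[of n m m] by (simp add: mult_2)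
  show "0 < real (ffall (n - m) m)" using ffall_pos[of m "n - m"] mn by simp
  show "card (dtuples n m) = ffall n m" using card_dtuples[of m n] mn by simp
  show "card (dtuples n (2*m)) = ffall n (2*m)" using card_dtuples[of "2*m" n] mn by simp
qed

lemma Lc_eq:
  "theta2_hat m h n X \<omega> - \<theta>\<^sup>2 - 2 * \<theta> * (theta_hat m h n X \<omega> - \<theta>)
   = (\<Sum>js\<in>dtuples n (2*m). (Hf m h (take m js) (\<lambda>l. X l \<omega>) - \<theta>) * (Hf m h (drop m js) (\<lambda>l. X l \<omega>) - \<theta>)) / real (ffall n (2*m))"
proof -
  define H where "H ks = Hf m h ks (\<lambda>l. X l \<omega>)" for ks
  define SA where "SA = (\<Sum>js\<in>dtuples n (2*m). H (take m js) * H (drop m js))"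
  define SB where "SB = (\<Sum>ks\<in>dtuples n m. H ks)"
  define F1 where "F1 = real (ffall n m)"
  define fm where "fm = real (ffall (n - m) m)"
  have F: "0 < F1" "real (ffall n (2*m)) = F1 * fm" "0 < fm" "real (card (dtuples n (2*m))) = F1 * fm"
    using F_facts by (simp_all add: F1_def fm_def)
  have st: "(\<Sum>js\<in>dtuples n (2*m). H (take m js)) = fm * SB"
    using sum_take[of m m n H] mn by (simp add: mult_2 fm_def SB_def)
  have sd: "(\<Sum>js\<in>dtuples n (2*m). H (drop m js)) = fm * SB"
    using sum_drop[of m m n H] mn by (simp add: mult_2 fm_def SB_def)
  have "(\<Sum>js\<in>dtuples n (2*m). (H (take m js) - \<theta>) * (H (drop m js) - \<theta>))
      = (\<Sum>js\<in>dtuples n (2*m). H (take m js) * H (drop m js) - \<theta> * H (take m js) - \<theta> * H (drop m js) + \<theta>\<^sup>2)"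
    by (rule sum.cong) (auto simp: algebra_simps power2_eq_square)
  also have "\<dots> = SA - \<theta> * (\<Sum>js\<in>dtuples n (2*m). H (take m js)) - \<theta> * (\<Sum>js\<in>dtuples n (2*m). H (drop m js)) + real (card (dtuples n (2*m))) * \<theta>\<^sup>2"
    unfolding SA_def by (simp add: sum.distrib sum_subtractf sum_distrib_left)
  also have "\<dots> = SA - \<theta> * (fm * SB) - \<theta> * (fm * SB) + real (card (dtuples n (2*m))) * \<theta>\<^sup>2"
    unfolding st sd ..
  finally have e: "(\<Sum>js\<in>dtuples n (2*m). (H (take m js) - \<theta>) * (H (drop m js) - \<theta>)) = SA - 2 * \<theta> * fm * SB + F1 * fm * \<theta>\<^sup>2"
    using F by simp
  have "theta2_hat m h n X \<omega> - \<theta>\<^sup>2 - 2 * \<theta> * (theta_hat m h n X \<omega> - \<theta>)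
      = SA / (F1 * fm) - \<theta>\<^sup>2 - 2 * \<theta> * (SB / F1 - \<theta>)"
    unfolding Ah_eq Bh_eq F(2) by (simp add: SA_def SB_def H_def F1_def)
  also have "\<dots> = (SA - 2 * \<theta> * fm * SB + F1 * fm * \<theta>\<^sup>2) / (F1 * fm)"
    using F by (simp add: field_simps power2_eq_square)
  finally show ?thesis unfolding F(2) e[unfolded H_def] by (simp add: H_def)
qed

lemma Dv_eq:
  "theta_hat m h n X \<omega> - \<theta> = (\<Sum>ks\<in>dtuples n m. Hf m h ks (\<lambda>l. X l \<omega>) - \<theta>) / real (ffall n m)"
proof -
  have F: "0 < real (ffall n m)" "card (dtuples n m) = ffall n m" using F_facts by simp_all
  show ?thesis unfolding Bh_eq using F by (simp add: sum_subtractf field_simps)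
qed

lemma pair_val:
  assumes js: "js \<in> dtuples n (2*m)" and ks: "ks \<in> dtuples n m"
  shows "(\<integral>\<omega>. (Hf m h (take m js) (\<lambda>l. X l \<omega>) - \<theta>) * (Hf m h (drop m js) (\<lambda>l. X l \<omega>) - \<theta>)
              * (Hf m h ks (\<lambda>l. X l \<omega>) - \<theta>) \<partial>M)
       = (if card (set ks \<inter> set (take m js)) + card (set ks \<inter> set (drop m js)) = 0 then 0
          else zeta3 M m D h \<theta> X (card (set ks \<inter> set (take m js)) + card (set ks \<inter> set (drop m js))) (card (set ks \<inter> set (take m js))))"
proof -
  define pa where "pa = card (set ks \<inter> set (take m js))"
  define pb where "pb = card (set ks \<inter> set (drop m js))"
  have ksd: "distinct ks" "length ks = m" using ks by (auto simp: dtuples_def)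
  have la: "length (filter (\<lambda>l. l \<in> set (take m js)) ks) = pa"
  proof -
    have d: "card (set (filter (\<lambda>l. l \<in> set (take m js)) ks)) = length (filter (\<lambda>l. l \<in> set (take m js)) ks)"
      by (rule distinct_card) (simp add: ksd)
    have s: "set (filter (\<lambda>l. l \<in> set (take m js)) ks) = set ks \<inter> set (take m js)" by auto
    show ?thesis unfolding pa_def s[symmetric] d by (rule refl)
  qed
  have lb: "length (filter (\<lambda>l. l \<in> set (drop m js)) ks) = pb"
  proof -
    have d: "card (set (filter (\<lambda>l. l \<in> set (drop m js)) ks)) = length (filter (\<lambda>l. l \<in> set (drop m js)) ks)"
      by (rule distinct_card) (simp add: ksd)
    have s: "set (filter (\<lambda>l. l \<in> set (drop m js)) ks) = set ks \<inter> set (drop m js)" by auto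
    show ?thesis unfolding pb_def s[symmetric] d by (rule refl)
  qed
  note cr = core[OF js ks, unfolded la lb]
  have le: "pa + pb \<le> m"
  proof -
    have "pa + pb = card ((set ks \<inter> set (take m js)) \<union> (set ks \<inter> set (drop m js)))"
      unfolding pa_def pb_def using js_props(3)[OF js] by (intro card_Un_disjoint[symmetric]) auto
    also have "\<dots> \<le> card (set ks)" by (intro card_mono) auto
    also have "\<dots> = m" using ksd by (simp add: distinct_card)
    finally show ?thesis .
  qed
  show ?thesis
  proof (cases "pa + pb = 0")
    case True
    then have "pa = 0" "pb = 0" by auto
    then have "Zf pa (pa + pb) y = 0" for y by (simp add: Zf_def htil_def)
    then show ?thesis unfolding pa_def[symmetric] pb_def[symmetric] using cr(2) True by simp
  next
    case False
    have z: "zeta3 M m D h \<theta> X (pa + pb) pa = (\<integral>\<omega>. Zf pa (pa + pb) (\<lambda>l. X l \<omega>) \<partial>M)"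
      using le cr(1) False by (intro zeta_eq) auto
    show ?thesis unfolding pa_def[symmetric] pb_def[symmetric] if_not_P[OF False] z using cr(2) .
  qed
qed

theorem main_loc:
  "variance (\<lambda>\<omega>. theta2_hat m h n X \<omega> - \<theta>\<^sup>2 - 2 * \<theta>bar * (theta_hat m h n X \<omega> - \<theta>))
   = variance (\<lambda>\<omega>. theta2_hat m h n X \<omega> - \<theta>\<^sup>2 - 2 * \<theta> * (theta_hat m h n X \<omega> - \<theta>))
     + (\<theta> - \<theta>bar)\<^sup>2 * variance (\<lambda>\<omega>. 2 * theta_hat m h n X \<omega>)
     + (\<theta> - \<theta>bar) * Xi3 M m D h \<theta> X n"
proof -
  define F1 where "F1 = real (ffall n m)"
  define F2 where "F2 = real (ffall n (2*m))"
  define G where "G js \<omega> = (Hf m h (take m js) (\<lambda>l. X l \<omega>) - \<theta>) * (Hf m h (drop m js) (\<lambda>l. X l \<omega>) - \<theta>)" for js \<omega>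
  define g where "g ks \<omega> = Hf m h ks (\<lambda>l. X l \<omega>) - \<theta>" for ks \<omega>
  define Lc where "Lc \<omega> = theta2_hat m h n X \<omega> - \<theta>\<^sup>2 - 2 * \<theta> * (theta_hat m h n X \<omega> - \<theta>)" for \<omega>
  define Dv where "Dv \<omega> = theta_hat m h n X \<omega> - \<theta>" for \<omega>
  have F1p: "0 < F1" using F_facts by (simp add: F1_def)
  have F2p: "0 < F2" using F_facts by (simp add: F2_def F1_def)
  have Lc_s: "Lc = (\<lambda>\<omega>. (1 / F2) * (\<Sum>js\<in>dtuples n (2*m). G js \<omega>))"
    by (auto simp: Lc_def Lc_eq G_def F2_def fun_eq_iff)
  have Dv_s: "Dv = (\<lambda>\<omega>. (1 / F1) * (\<Sum>ks\<in>dtuples n m. g ks \<omega>))"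
    by (auto simp: Dv_def Dv_eq g_def F1_def fun_eq_iff)
  have sqG: "sqi (G js)" if js: "js \<in> dtuples n (2*m)" for js
  proof -
    note jp = js_props[OF js]
    have "G js \<in> borel_measurable M"
      unfolding G_def[abs_def] using H_meas[OF jp(1)] H_meas[OF jp(2)] by measurable
    moreover have "integrable M (\<lambda>\<omega>. (G js \<omega>)\<^sup>2)"
      unfolding G_def using pair_sq_int[OF jp] .
    ultimately show ?thesis by (simp add: sqi_def)
  qed
  have sqg: "sqi (g ks)" if ks: "ks \<in> dtuples n m" for ks
  proof -
    have "g ks \<in> borel_measurable M"
      unfolding g_def[abs_def] using H_meas[OF ks_dtl[OF ks]] by measurable
    moreover have "integrable M (\<lambda>\<omega>. (g ks \<omega>)\<^sup>2)"
      unfolding g_def using g_sq_int[OF ks_dtl[OF ks]] .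
    ultimately show ?thesis by (simp add: sqi_def)
  qed
  have sqLc: "sqi Lc" unfolding Lc_s
    by (intro sqi_cmult sqi_sum finite_dtuples sqG)
  have sqDv: "sqi Dv" unfolding Dv_s
    by (intro sqi_cmult sqi_sum finite_dtuples sqg)
  have Eg: "(\<integral>\<omega>. g ks \<omega> \<partial>M) = 0" if ks: "ks \<in> dtuples n m" for ks
  proof -
    have p1: "prob (space M) = 1" by (rule prob_space)
    have "(\<integral>\<omega>. g ks \<omega> \<partial>M) = (\<integral>\<omega>. Hf m h ks (\<lambda>l. X l \<omega>) \<partial>M) - (\<integral>\<omega>. \<theta> \<partial>M)"
      unfolding g_def by (rule Bochner_Integration.integral_diff[OF H_int[OF ks_dtl[OF ks]] integrable_const])
    also have "(\<integral>\<omega>. \<theta> \<partial>M) = \<theta>"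
      by (simp only: lebesgue_integral_const p1 scaleR_one)
    finally show ?thesis by (simp only: H_exp[OF ks_dtl[OF ks]] diff_self)
  qed
  have EDv: "(\<integral>\<omega>. Dv \<omega> \<partial>M) = 0"
  proof -
    have "(\<integral>\<omega>. (\<Sum>ks\<in>dtuples n m. g ks \<omega>) \<partial>M) = (\<Sum>ks\<in>dtuples n m. \<integral>\<omega>. g ks \<omega> \<partial>M)"
      using sqg sqi_int by (intro Bochner_Integration.integral_sum) auto
    also have "\<dots> = 0" using Eg by simp
    finally show ?thesis unfolding Dv_s by simp
  qed
  have Lsplit: "(\<lambda>\<omega>. theta2_hat m h n X \<omega> - \<theta>\<^sup>2 - 2 * \<theta>bar * (theta_hat m h n X \<omega> - \<theta>))
      = (\<lambda>\<omega>. Lc \<omega> + (2 * (\<theta> - \<theta>bar)) * Dv \<omega>)"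
    by (auto simp: Lc_def Dv_def algebra_simps fun_eq_iff)
  have V1: "variance (\<lambda>\<omega>. Lc \<omega> + (2 * (\<theta> - \<theta>bar)) * Dv \<omega>)
      = variance Lc + (2 * (\<theta> - \<theta>bar))\<^sup>2 * (\<integral>\<omega>. (Dv \<omega>)\<^sup>2 \<partial>M) + 2 * (2 * (\<theta> - \<theta>bar)) * (\<integral>\<omega>. Lc \<omega> * Dv \<omega> \<partial>M)"
    by (rule var_lin[OF sqLc sqDv EDv])
  have V2: "variance (\<lambda>\<omega>. 2 * theta_hat m h n X \<omega>) = 4 * (\<integral>\<omega>. (Dv \<omega>)\<^sup>2 \<partial>M)"
  proof -
    have e: "2 * theta_hat m h n X \<omega> = 2 * \<theta> + 2 * Dv \<omega>" for \<omega>
      by (auto simp: Dv_def)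
    have Di: "integrable M Dv" using sqi_int[OF sqDv] .
    have p1: "prob (space M) = 1" by (rule prob_space)
    have E: "(\<integral>\<omega>. 2 * \<theta> + 2 * Dv \<omega> \<partial>M) = 2 * \<theta>"
      using Di EDv p1 by simp
    have e2: "(\<lambda>\<omega>. (2 * \<theta> + 2 * Dv \<omega> - 2 * \<theta>)\<^sup>2) = (\<lambda>\<omega>. 4 * (Dv \<omega>)\<^sup>2)"
      by (simp add: fun_eq_iff power2_eq_square)
    show ?thesis unfolding e E e2 by simp
  qed
  have V3: "4 * (\<integral>\<omega>. Lc \<omega> * Dv \<omega> \<partial>M) = Xi3 M m D h \<theta> X n"
  proof -
    have prod: "Lc \<omega> * Dv \<omega> = (1 / (F2 * F1)) * (\<Sum>js\<in>dtuples n (2*m). \<Sum>ks\<in>dtuples n m. G js \<omega> * g ks \<omega>)" for \<omega>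
      unfolding Lc_s Dv_s by (simp add: sum_product)
    have int: "integrable M (\<lambda>\<omega>. G js \<omega> * g ks \<omega>)" if "js \<in> dtuples n (2*m)" "ks \<in> dtuples n m" for js ks
      unfolding G_def g_def using triple_int[OF js_props(1,2)[OF that(1)] ks_dtl[OF that(2)] js_props(3)[OF that(1)]] .
    have "(\<integral>\<omega>. Lc \<omega> * Dv \<omega> \<partial>M) = (1 / (F2 * F1)) * (\<integral>\<omega>. (\<Sum>js\<in>dtuples n (2*m). \<Sum>ks\<in>dtuples n m. G js \<omega> * g ks \<omega>) \<partial>M)"
      unfolding prod by simp
    also have "(\<integral>\<omega>. (\<Sum>js\<in>dtuples n (2*m). \<Sum>ks\<in>dtuples n m. G js \<omega> * g ks \<omega>) \<partial>M)
        = (\<Sum>js\<in>dtuples n (2*m). \<Sum>ks\<in>dtuples n m. \<integral>\<omega>. G js \<omega> * g ks \<omega> \<partial>M)"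
    proof -
      have "(\<integral>\<omega>. (\<Sum>js\<in>dtuples n (2*m). \<Sum>ks\<in>dtuples n m. G js \<omega> * g ks \<omega>) \<partial>M)
          = (\<Sum>js\<in>dtuples n (2*m). \<integral>\<omega>. (\<Sum>ks\<in>dtuples n m. G js \<omega> * g ks \<omega>) \<partial>M)"
        using int by (intro Bochner_Integration.integral_sum integrable_sum) auto
      also have "\<dots> = (\<Sum>js\<in>dtuples n (2*m). \<Sum>ks\<in>dtuples n m. \<integral>\<omega>. G js \<omega> * g ks \<omega> \<partial>M)"
        using int by (intro sum.cong refl Bochner_Integration.integral_sum) auto
      finally show ?thesis .
    qed
    also have "\<dots> = (\<Sum>js\<in>dtuples n (2*m). \<Sum>ks\<in>dtuples n m.
        (if card (set ks \<inter> set (take m js)) + card (set ks \<inter> set (drop m js)) = 0 then 0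
         else zeta3 M m D h \<theta> X (card (set ks \<inter> set (take m js)) + card (set ks \<inter> set (drop m js))) (card (set ks \<inter> set (take m js)))))"
      by (intro sum.cong refl) (simp add: G_def g_def pair_val)
    finally have "4 * (\<integral>\<omega>. Lc \<omega> * Dv \<omega> \<partial>M) = 4 / (real (ffall n (2*m)) * real (ffall n m)) * (\<Sum>js\<in>dtuples n (2*m). \<Sum>ks\<in>dtuples n m.
        (if card (set ks \<inter> set (take m js)) + card (set ks \<inter> set (drop m js)) = 0 then 0
         else zeta3 M m D h \<theta> X (card (set ks \<inter> set (take m js)) + card (set ks \<inter> set (drop m js))) (card (set ks \<inter> set (take m js)))))"
      by (simp add: F1_def F2_def)
    also have "\<dots> = Xi3 M m D h \<theta> X n"
      unfolding Xi3_def using zeta3_0 by (intro comb_main m1 mn) auto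
    finally show ?thesis .
  qed
  have Lpt: "theta2_hat m h n X \<omega> - \<theta>\<^sup>2 - 2 * \<theta>bar * (theta_hat m h n X \<omega> - \<theta>)
      = Lc \<omega> + (2 * (\<theta> - \<theta>bar)) * Dv \<omega>" for \<omega>
    by (auto simp: Lc_def Dv_def algebra_simps)
  have R: "variance (\<lambda>\<omega>. theta2_hat m h n X \<omega> - \<theta>\<^sup>2 - 2 * \<theta> * (theta_hat m h n X \<omega> - \<theta>)) = variance Lc"
    by (simp only: Lc_def[abs_def])
  have "variance (\<lambda>\<omega>. theta2_hat m h n X \<omega> - \<theta>\<^sup>2 - 2 * \<theta>bar * (theta_hat m h n X \<omega> - \<theta>))
      = variance (\<lambda>\<omega>. Lc \<omega> + (2 * (\<theta> - \<theta>bar)) * Dv \<omega>)"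
    by (simp only: Lpt)
  also have "\<dots> = variance Lc + (2 * (\<theta> - \<theta>bar))\<^sup>2 * (\<integral>\<omega>. (Dv \<omega>)\<^sup>2 \<partial>M) + 2 * (2 * (\<theta> - \<theta>bar)) * (\<integral>\<omega>. Lc \<omega> * Dv \<omega> \<partial>M)"
    by (rule V1)
  also have "\<dots> = variance Lc + (\<theta> - \<theta>bar)\<^sup>2 * (4 * (\<integral>\<omega>. (Dv \<omega>)\<^sup>2 \<partial>M)) + (\<theta> - \<theta>bar) * (4 * (\<integral>\<omega>. Lc \<omega> * Dv \<omega> \<partial>M))"
    by (simp add: power2_eq_square algebra_simps)
  also have "\<dots> = variance (\<lambda>\<omega>. theta2_hat m h n X \<omega> - \<theta>\<^sup>2 - 2 * \<theta> * (theta_hat m h n X \<omega> - \<theta>))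
     + (\<theta> - \<theta>bar)\<^sup>2 * variance (\<lambda>\<omega>. 2 * theta_hat m h n X \<omega>)
     + (\<theta> - \<theta>bar) * Xi3 M m D h \<theta> X n"
    unfolding R V2 V3 ..
  finally show ?thesis .
qed

end

theorem lemma3:
  fixes M :: "'a measure" and N :: "'e measure"
    and X :: "nat \<Rightarrow> nat \<Rightarrow> 'a \<Rightarrow> 'e"
    and h :: "(nat \<Rightarrow> 'e) \<Rightarrow> real"
    and m k i :: nat and n :: "nat \<Rightarrow> nat"
    and \<theta> :: "nat \<Rightarrow> real" and \<theta>bar :: real
  assumes "prob_space M"
    and "1 \<le> m"
    and "i < k"
    and "\<forall>i'<k. 2 * m \<le> n i'"
    and "h \<in> borel_measurable (PiM {..<m} (\<lambda>_. N))"
    and "symmetric_kernel m N h"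
    and "prob_space.indep_vars M (\<lambda>_. N) (\<lambda>(i', j). X i' j) {(i', j). i' < k \<and> j < n i'}"
    and "\<forall>i'<k. \<forall>j<n i'. distr M N (X i' j) = distr M N (X i' 0)"
    and "\<forall>i'<k. integrable M (\<lambda>\<omega>. (happ m h (\<lambda>l. X i' l \<omega>))\<^sup>2)"
    and "\<And>i'. \<theta> i' = (\<integral>\<omega>. happ m h (\<lambda>l. X i' l \<omega>) \<partial>M)"
    and "\<theta>bar = (\<Sum>i'<k. \<theta> i') / real k"
  shows "prob_space.variance M
           (\<lambda>\<omega>. theta2_hat m h (n i) (X i) \<omega> - (\<theta> i)\<^sup>2
                  - 2 * \<theta>bar * (theta_hat m h (n i) (X i) \<omega> - \<theta> i))
       = prob_space.variance M
           (\<lambda>\<omega>. theta2_hat m h (n i) (X i) \<omega> - (\<theta> i)\<^sup>2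
                  - 2 * \<theta> i * (theta_hat m h (n i) (X i) \<omega> - \<theta> i))
         + (\<theta> i - \<theta>bar)\<^sup>2 * prob_space.variance M (\<lambda>\<omega>. 2 * theta_hat m h (n i) (X i) \<omega>)
         + (\<theta> i - \<theta>bar) * Xi3 M m (distr M N (X i 0)) h (\<theta> i) (X i) (n i)"
proof -
  interpret P: prob_space M by fact
  have mn: "2 * m \<le> n i" using assms(3,4) by auto
  have npos: "0 < n i" using mn assms(2) by auto
  define I where "I = {(i', j). i' < k \<and> j < n i'}"
  define Xp where "Xp = (\<lambda>(i', j). X i' j)"
  have ind: "P.indep_vars (\<lambda>_. N) Xp I" using assms(7) by (simp add: I_def Xp_def)
  have rvI: "Xp p \<in> measurable M N" if "p \<in> I" for p
    using ind that unfolding P.indep_vars_def by blast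
  have iI: "(i, l) \<in> I" if "l < n i" for l using that assms(3) by (simp add: I_def)
  have Xmeas: "X i l \<in> measurable M N" if "l < n i" for l
    using rvI[OF iI[OF that]] by (simp add: Xp_def)
  have X0: "X i 0 \<in> measurable M N" using Xmeas npos by blast
  have ident: "distr M N (X i l) = distr M N (X i 0)" if "l < n i" for l
    using assms(8) assms(3) that by blast
  define Y where "Y p = (if p \<in> I then Xp p else X i 0)" for p
  have rvY: "Y p \<in> measurable M N" for p using rvI X0 by (simp add: Y_def)
  have indY: "P.indep_vars (\<lambda>_. N) Y I"
    using ind by (rule iffD1[OF P.indep_vars_cong, rotated 3]) (auto simp: Y_def)
  have Ine: "I \<noteq> {}" using iI[OF npos] by blast
  have lawY: "distr M (PiM I (\<lambda>_. N)) (\<lambda>\<omega>. \<lambda>p\<in>I. Y p \<omega>) = PiM I (\<lambda>p. distr M N (Y p))"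
    using iffD1[OF P.indep_vars_iff_distr_eq_PiM[OF Ine rvY] indY] .
  have probY: "prob_space (distr M N (Y p))" for p by (rule P.prob_space_distr[OF rvY])
  have mY: "(\<lambda>\<omega>. \<lambda>p\<in>I. Y p \<omega>) \<in> measurable M (PiM I (\<lambda>_. N))"
    by (intro measurable_restrict rvY)
  have mr: "(\<lambda>z. \<lambda>l\<in>{..<n i}. z (i, l)) \<in> measurable (PiM I (\<lambda>_. N)) (PiM {..<n i} (\<lambda>_. N))"
    using iI by (intro measurable_restrict measurable_component_singleton) auto
  have inj: "inj_on (\<lambda>l. (i, l)) {..<n i}" "(\<lambda>l. (i, l)) \<in> {..<n i} \<rightarrow> I"
    using iI by (auto simp: inj_on_def)
  have law: "distr M (PiM {..<n i} (\<lambda>_. N)) (\<lambda>\<omega>. \<lambda>l\<in>{..<n i}. X i l \<omega>) = PiM {..<n i} (\<lambda>_. distr M N (X i 0))"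
  proof -
    have "distr M (PiM {..<n i} (\<lambda>_. N)) (\<lambda>\<omega>. \<lambda>l\<in>{..<n i}. X i l \<omega>)
        = distr (distr M (PiM I (\<lambda>_. N)) (\<lambda>\<omega>. \<lambda>p\<in>I. Y p \<omega>)) (PiM {..<n i} (\<lambda>_. N)) (\<lambda>z. \<lambda>l\<in>{..<n i}. z (i, l))"
      apply (subst distr_distr[OF mr mY])
      apply (rule distr_cong)
      using iI by (auto simp: comp_def fun_eq_iff Y_def Xp_def)
    also have "\<dots> = distr (PiM I (\<lambda>p. distr M N (Y p))) (PiM {..<n i} (\<lambda>l. distr M N (Y (i, l)))) (\<lambda>z. \<lambda>l\<in>{..<n i}. z (i, l))"
      unfolding lawY by (rule distr_cong) (auto intro!: sets_PiM_cong)
    also have "\<dots> = PiM {..<n i} (\<lambda>l. distr M N (Y (i, l)))"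
      using distr_PiM_reindex[of I "\<lambda>p. distr M N (Y p)" "\<lambda>l. (i, l)" "{..<n i}"] probY inj by simp
    also have "\<dots> = PiM {..<n i} (\<lambda>_. distr M N (X i 0))"
    proof (rule PiM_cong[OF refl])
      fix l assume "l \<in> {..<n i}"
      then show "distr M N (Y (i, l)) = distr M N (X i 0)"
        using iI[of l] ident[of l] by (simp add: Y_def Xp_def)
    qed
    finally show ?thesis .
  qed
  have US: "US M N (X i) h m (n i) (\<theta> i)"
    unfolding US_def US_axioms_def
    using assms(1,2,5,6) mn Xmeas ident law assms(3,9) assms(10)[of i] by blast
  interpret U: US M N "X i" h m "n i" "\<theta> i" by (rule US)
  show ?thesis by (rule U.main_loc)
qed

end
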